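(* Let $d=(d_1,\ldots,d_n)$ be a degree sequence with $d_4\ge 2$, $\sum_i d_i>2n$, and $\mu_{odd}+\mu_1\ge 2$, and let $m=\frac12\sum_i d_i$. There is a bipartite cactus realization of $d$ if and only if $m\le\left\lfloor\frac{4(n-1)-\beta}{3}\right\rfloor$, where $\beta=\max\{\mu_1,\tfrac12(\mu_1+\mu_{odd})\}$.
   Context: A degree sequence is a sequence of integers $d_i\in\{1,\ldots,n-1\}$ with even sum and $d_1\ge\cdots\ge d_n$; a realization is a simple graph on $\{1,\ldots,n\}$ with $\deg(i)=d_i$. A cactus is a connected simple graph in which every edge lies on at most one cycle; a bi-cactus is a bipartite cactus. $\mu_1$ is the number of entries of $d$ equal to $1$, and $\mu_{odd}$ is the number of entries that are odd integers greater than $1$. *)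

theory Defs
  imports Complex_Main
begin

definition simple_graph_on :: "nat \<Rightarrow> nat set set \<Rightarrow> bool" where
  "simple_graph_on n E \<longleftrightarrow> (\<forall>e\<in>E. \<exists>u v. e = {u, v} \<and> u \<noteq> v \<and> u \<in> {1..n} \<and> v \<in> {1..n})"

definition gdeg :: "nat set set \<Rightarrow> nat \<Rightarrow> nat" where
  "gdeg E i = card {e\<in>E. i \<in> e}"

definition is_path :: "nat set set \<Rightarrow> nat list \<Rightarrow> bool" where
  "is_path E vs \<longleftrightarrow> vs \<noteq> [] \<and> (\<forall>i. Suc i < length vs \<longrightarrow> {vs ! i, vs ! Suc i} \<in> E)"

definition connected_graph :: "nat \<Rightarrow> nat set set \<Rightarrow> bool" where
  "connected_graph n E \<longleftrightarrow>
     (\<forall>u\<in>{1..n}. \<forall>v\<in>{1..n}. \<exists>vs. is_path E vs \<and> hd vs = u \<and> last vs = v)"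

definition is_cycle_edges :: "nat set set \<Rightarrow> nat set set \<Rightarrow> bool" where
  "is_cycle_edges E C \<longleftrightarrow> (\<exists>vs. length vs \<ge> 3 \<and> distinct vs \<and>
      C = {{vs ! i, vs ! ((i + 1) mod length vs)} | i. i < length vs} \<and> C \<subseteq> E)"

definition is_cactus :: "nat \<Rightarrow> nat set set \<Rightarrow> bool" where
  "is_cactus n E \<longleftrightarrow> simple_graph_on n E \<and> connected_graph n E \<and>
     (\<forall>e\<in>E. \<forall>C1 C2. is_cycle_edges E C1 \<and> is_cycle_edges E C2 \<and> e \<in> C1 \<and> e \<in> C2 \<longrightarrow> C1 = C2)"

definition is_bipartite :: "nat \<Rightarrow> nat set set \<Rightarrow> bool" where
  "is_bipartite n E \<longleftrightarrow> (\<exists>A. A \<subseteq> {1..n} \<and> (\<forall>e\<in>E. card (e \<inter> A) = 1))"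

definition is_bicactus :: "nat \<Rightarrow> nat set set \<Rightarrow> bool" where
  "is_bicactus n E \<longleftrightarrow> is_cactus n E \<and> is_bipartite n E"

definition degree_sequence :: "nat \<Rightarrow> (nat \<Rightarrow> nat) \<Rightarrow> bool" where
  "degree_sequence n d \<longleftrightarrow> (\<forall>i\<in>{1..n}. 1 \<le> d i \<and> d i \<le> n - 1) \<and>
     even (\<Sum>i=1..n. d i) \<and> (\<forall>i j. 1 \<le> i \<and> i \<le> j \<and> j \<le> n \<longrightarrow> d j \<le> d i)"

definition realizes :: "nat \<Rightarrow> (nat \<Rightarrow> nat) \<Rightarrow> nat set set \<Rightarrow> bool" where
  "realizes n d E \<longleftrightarrow> simple_graph_on n E \<and> (\<forall>i\<in>{1..n}. gdeg E i = d i)"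

definition mu1 :: "nat \<Rightarrow> (nat \<Rightarrow> nat) \<Rightarrow> nat" where
  "mu1 n d = card {i\<in>{1..n}. d i = 1}"

definition mu_odd :: "nat \<Rightarrow> (nat \<Rightarrow> nat) \<Rightarrow> nat" where
  "mu_odd n d = card {i\<in>{1..n}. odd (d i) \<and> d i > 1}"

end

theory Submission
  imports Defs "HOL-Library.Multiset"
begin

fun walk :: "nat set set \<Rightarrow> nat list \<Rightarrow> bool" where
  "walk E [] = False"
| "walk E [x] = True"
| "walk E (x # y # xs) = ({x, y} \<in> E \<and> walk E (y # xs))"

lemma is_path_Cons2: "is_path E (x # y # xs) = ({x,y} \<in> E \<and> is_path E (y # xs))"
  unfolding is_path_def
proof safe
  fix i assume A: "\<forall>i. Suc i < length (x # y # xs) \<longrightarrow> {(x # y # xs) ! i, (x # y # xs) ! Suc i} \<in> E"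
    "Suc i < length (y # xs)"
  have "{(x # y # xs) ! Suc i, (x # y # xs) ! Suc (Suc i)} \<in> E" using A(1)[rule_format, of "Suc i"] A(2) by simp
  then show "{(y # xs) ! i, (y # xs) ! Suc i} \<in> E" by (simp only: nth_Cons_Suc)
next
  assume "\<forall>i. Suc i < length (x # y # xs) \<longrightarrow> {(x # y # xs) ! i, (x # y # xs) ! Suc i} \<in> E"
  then have "{(x # y # xs) ! 0, (x # y # xs) ! Suc 0} \<in> E" by (metis length_Cons zero_less_Suc Suc_less_eq)
  then show "{x,y} \<in> E" by simp
next
  fix i assume a: "{x, y} \<in> E" "\<forall>i. Suc i < length (y # xs) \<longrightarrow> {(y # xs) ! i, (y # xs) ! Suc i} \<in> E"
    "Suc i < length (x # y # xs)"
  show "{(x # y # xs) ! i, (x # y # xs) ! Suc i} \<in> E"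
  proof (cases i)
    case 0 then show ?thesis using a by simp
  next
    case (Suc j) then show ?thesis using a(2)[rule_format, of j] a(3) by simp
  qed
qed

lemma is_path_walk: "is_path E vs = walk E vs"
proof (induction vs rule: walk.induct)
  case (1 E) then show ?case by (simp add: is_path_def)
next
  case (2 E x) then show ?case by (simp add: is_path_def)
next
  case (3 E x y xs)
  then show ?case using is_path_Cons2 by simp
qed

lemma walk_nonempty: "walk E xs \<Longrightarrow> xs \<noteq> []"
  by (cases xs) auto

lemma walk_Cons: "walk E (x # xs) \<longleftrightarrow> (xs = [] \<or> ({x, hd xs} \<in> E \<and> walk E xs))"
  by (cases xs) auto

lemma walk_append:
  "xs \<noteq> [] \<Longrightarrow> ys \<noteq> [] \<Longrightarrow> walk E (xs @ ys) \<longleftrightarrow> walk E xs \<and> {last xs, hd ys} \<in> E \<and> walk E ys"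
proof (induction xs rule: walk.induct)
  case (1 E) then show ?case by simp
next
  case (2 E x) then show ?case by (cases ys) auto
next
  case (3 E x y xs) then show ?case by auto
qed

lemma walk_join:
  assumes "walk E xs" "walk E ys" "last xs = hd ys"
  shows "walk E (xs @ tl ys)"
proof (cases "tl ys = []")
  case True then show ?thesis using assms by simp
next
  case False
  have ys: "ys = hd ys # tl ys" using assms(2) walk_nonempty by (cases ys) auto
  have "walk E (tl ys)" "{hd ys, hd (tl ys)} \<in> E"
    using assms(2) False by (metis ys walk_Cons)+
  then show ?thesis using assms walk_nonempty False by (simp add: walk_append)
qed

lemma walk_rev: "walk E xs \<Longrightarrow> walk E (rev xs)"
proof (induction xs rule: walk.induct)
  case (3 E x y xs)
  then have "walk E (rev xs @ [y])" by simp
  moreover have "{y, x} \<in> E" using 3 by (simp add: insert_commute)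
  ultimately show ?case using walk_append[of "rev xs @ [y]" "[x]" E] by simp
qed auto

lemma walk_mono: "walk E xs \<Longrightarrow> E \<subseteq> F \<Longrightarrow> walk F xs"
  by (induction xs rule: walk.induct) auto

lemma walk_appendD1: "walk E (xs @ ys) \<Longrightarrow> xs \<noteq> [] \<Longrightarrow> walk E xs"
  by (cases "ys = []") (auto simp: walk_append)

lemma walk_appendD2: "walk E (xs @ ys) \<Longrightarrow> ys \<noteq> [] \<Longrightarrow> walk E ys"
  by (cases "xs = []") (auto simp: walk_append)

definition wedges :: "nat list \<Rightarrow> nat set set" where
  "wedges xs = {{xs ! i, xs ! Suc i} | i. Suc i < length xs}"

lemma wedges_simps[simp]:
  "wedges [] = {}" "wedges [x] = {}" "wedges (x # y # xs) = insert {x,y} (wedges (y # xs))"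
proof -
  show "wedges [] = {}" "wedges [x] = {}" by (auto simp: wedges_def)
  show "wedges (x # y # xs) = insert {x,y} (wedges (y # xs))"
    unfolding wedges_def
  proof (intro equalityI subsetI)
    fix e assume "e \<in> {{(x # y # xs) ! i, (x # y # xs) ! Suc i} |i. Suc i < length (x # y # xs)}"
    then obtain i where "e = {(x # y # xs) ! i, (x # y # xs) ! Suc i}" "Suc i < length (x # y # xs)" by blast
    then show "e \<in> insert {x, y} {{(y # xs) ! i, (y # xs) ! Suc i} |i. Suc i < length (y # xs)}"
      by (cases i) auto
  next
    fix e assume "e \<in> insert {x, y} {{(y # xs) ! i, (y # xs) ! Suc i} |i. Suc i < length (y # xs)}"
    then show "e \<in> {{(x # y # xs) ! i, (x # y # xs) ! Suc i} |i. Suc i < length (x # y # xs)}"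
    proof
      assume "e = {x,y}" then show ?thesis by force
    next
      assume "e \<in> {{(y # xs) ! i, (y # xs) ! Suc i} |i. Suc i < length (y # xs)}"
      then obtain i where "e = {(y # xs) ! i, (y # xs) ! Suc i}" "Suc i < length (y # xs)" by blast
      then show ?thesis by (intro CollectI exI[of _ "Suc i"]) auto
    qed
  qed
qed

lemma walk_wedges: "walk E xs \<longleftrightarrow> xs \<noteq> [] \<and> wedges xs \<subseteq> E"
  by (induction xs rule: walk.induct) auto

lemma walk_self: "xs \<noteq> [] \<Longrightarrow> walk (wedges xs) xs"
  using walk_wedges by blast

lemma walk_distinct:
  assumes "walk E xs"
  shows "\<exists>ys. walk E ys \<and> distinct ys \<and> hd ys = hd xs \<and> last ys = last xs \<and> set ys \<subseteq> set xs"
  using assms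
proof (induction "length xs" arbitrary: xs rule: less_induct)
  case less
  show ?case
  proof (cases "distinct xs")
    case True then show ?thesis using less by blast
  next
    case False
    then obtain as y bs cs where xs: "xs = as @ [y] @ bs @ [y] @ cs"
      using not_distinct_decomp by blast
    define zs where "zs = as @ [y] @ cs"
    have w1: "walk E (as @ [y])" using less(2) xs walk_appendD1[of E "as @ [y]"] by simp
    have w2: "walk E ([y] @ cs)" using less(2) xs walk_appendD2[of E "as @ y # bs" "y # cs"] by simp
    have "walk E zs" unfolding zs_def using walk_join[OF w1 w2] by simp
    moreover have "length zs < length xs" using xs zs_def by simp
    moreover have "hd zs = hd xs" "last zs = last xs" "set zs \<subseteq> set xs"
      using xs zs_def by (cases as; cases cs; auto)+
    ultimately show ?thesis using less(1) by (metis order_trans)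
  qed
qed

lemma walk_set_in:
  assumes "walk E xs" "\<forall>e\<in>E. e \<subseteq> V" "hd xs \<in> V"
  shows "set xs \<subseteq> V"
  using assms
proof (induction E xs rule: walk.induct)
  case (3 E x y xs)
  then have "y \<in> V" by auto
  then show ?case using 3 by auto
qed auto

lemma walk_last_Cons: "xs \<noteq> [] \<Longrightarrow> last (x # xs) = last xs" by simp

definition cedges :: "nat list \<Rightarrow> nat set set" where
  "cedges vs = {{vs ! i, vs ! ((i + 1) mod length vs)} | i. i < length vs}"

definition cyc :: "nat set set \<Rightarrow> nat list \<Rightarrow> bool" where
  "cyc E vs \<longleftrightarrow> 3 \<le> length vs \<and> distinct vs \<and> cedges vs \<subseteq> E"

lemma is_cycle_edges_iff: "is_cycle_edges E C \<longleftrightarrow> (\<exists>vs. cyc E vs \<and> C = cedges vs)"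
  unfolding is_cycle_edges_def cyc_def cedges_def by auto

lemma wedges_snoc: "xs \<noteq> [] \<Longrightarrow> wedges (xs @ [y]) = insert {last xs, y} (wedges xs)"
proof (induction xs)
  case (Cons x xs)
  then show ?case by (cases xs) (auto simp: insert_commute)
qed auto

lemma wedges_subset_set: "e \<in> wedges xs \<Longrightarrow> e \<subseteq> set xs"
  unfolding wedges_def by auto

lemma wedges_append_sub: "wedges xs \<subseteq> wedges (xs @ ys)"
  unfolding wedges_def by (force simp: nth_append)

lemma wedges_take_sub: "wedges (take k xs) \<subseteq> wedges xs"
  by (metis append_take_drop_id wedges_append_sub)

lemma cedges_wedges:
  assumes "vs \<noteq> []"
  shows "cedges vs = insert {last vs, hd vs} (wedges vs)"
proof (intro equalityI subsetI)
  fix e assume "e \<in> cedges vs"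
  then obtain i where e: "e = {vs ! i, vs ! ((i + 1) mod length vs)}" "i < length vs"
    unfolding cedges_def by blast
  show "e \<in> insert {last vs, hd vs} (wedges vs)"
  proof (cases "Suc i < length vs")
    case True
    then show ?thesis using e unfolding wedges_def by auto
  next
    case False
    then have "i = length vs - 1" using e by simp
    then have "e = {last vs, hd vs}" using e assms by (simp add: last_conv_nth hd_conv_nth)
    then show ?thesis by simp
  qed
next
  fix e assume "e \<in> insert {last vs, hd vs} (wedges vs)"
  then show "e \<in> cedges vs"
  proof
    assume e: "e = {last vs, hd vs}"
    have "length vs - 1 < length vs" "(length vs - 1 + 1) mod length vs = 0" using assms by auto
    then show ?thesis unfolding cedges_def e using assms
      by (intro CollectI exI[of _ "length vs - 1"]) (simp add: last_conv_nth hd_conv_nth)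
  next
    assume "e \<in> wedges vs"
    then obtain i where e: "e = {vs ! i, vs ! Suc i}" "Suc i < length vs" unfolding wedges_def by blast
    then show ?thesis unfolding cedges_def by (intro CollectI exI[of _ i]) auto
  qed
qed

lemma cyc_from_path:
  assumes "walk E P" "distinct P" "3 \<le> length P" "{last P, hd P} \<in> E"
  shows "cyc E P"
  using assms walk_wedges cedges_wedges unfolding cyc_def by auto

lemma walk_cycle:
  assumes W: "walk F W" "hd W = v" "last W = u" and FE: "F \<subseteq> E" and e: "e = {u, v}" "e \<in> E" "e \<notin> F"
    and uv: "u \<noteq> v"
  shows "\<exists>P. cyc E P \<and> walk F P \<and> distinct P \<and> hd P = v \<and> last P = u \<and> e \<in> cedges P
            \<and> cedges P = insert e (wedges P)"
proof -
  obtain P where P: "walk F P" "distinct P" "hd P = v" "last P = u" "set P \<subseteq> set W"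
    using walk_distinct[OF W(1)] W by auto
  have Pne: "P \<noteq> []" using P walk_nonempty by auto
  have "length P \<noteq> 1" using P uv by (cases P) auto
  moreover have "length P \<noteq> 2"
  proof
    assume "length P = 2"
    then obtain a b where "P = [a, b]" by (cases P; cases "tl P") auto
    then have "{v, u} \<in> F" using P by auto
    then show False using e by (auto simp: insert_commute)
  qed
  moreover have "length P \<noteq> 0" using Pne by simp
  ultimately have "3 \<le> length P" by linarith
  moreover have "{last P, hd P} = e" using P e by auto
  ultimately have "cyc E P" using cyc_from_path[of E P] P walk_mono[OF P(1) FE] e by auto
  moreover have "cedges P = insert e (wedges P)" using cedges_wedges[OF Pne] \<open>{last P, hd P} = e\<close> by simp
  ultimately show ?thesis using P by auto
qed

lemma cyc_succ_pred:
  assumes "cyc E vs" "k < length vs"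
  defines "L \<equiv> length vs"
  shows "vs ! ((k + 1) mod L) \<noteq> vs ! ((k + L - 1) mod L)"
    "vs ! ((k + 1) mod L) \<noteq> vs ! k" "vs ! ((k + L - 1) mod L) \<noteq> vs ! k"
    "{vs ! k, vs ! ((k + 1) mod L)} \<in> cedges vs" "{vs ! ((k + L - 1) mod L), vs ! k} \<in> cedges vs"
proof -
  have L3: "3 \<le> L" and d: "distinct vs" using assms unfolding cyc_def by auto
  have kL: "k < L" using assms by simp
  define s where "s = (if k + 1 < L then k + 1 else 0)"
  define p where "p = (if k = 0 then L - 1 else k - 1)"
  have s: "(k + 1) mod L = s"
  proof (cases "k + 1 < L")
    case True then show ?thesis by (simp add: s_def)
  next
    case False then have "k + 1 = L" using kL by simp
    then show ?thesis by (simp add: s_def)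
  qed
  have p: "(k + L - 1) mod L = p"
  proof (cases "k = 0")
    case True then show ?thesis using L3 by (simp add: p_def)
  next
    case False then have "k + L - 1 = (k - 1) + L" by simp
    then have "(k + L - 1) mod L = (k - 1) mod L" by simp
    also have "\<dots> = k - 1" using kL by simp
    finally show ?thesis using False by (simp add: p_def)
  qed
  have sp: "s < L" "p < L" "s \<noteq> p" "s \<noteq> k" "p \<noteq> k" using L3 kL unfolding s_def p_def by auto
  have nth_inj: "\<And>i j. i < L \<Longrightarrow> j < L \<Longrightarrow> i \<noteq> j \<Longrightarrow> vs ! i \<noteq> vs ! j"
    using d nth_eq_iff_index_eq unfolding L_def by blast
  show "vs ! ((k + 1) mod L) \<noteq> vs ! ((k + L - 1) mod L)" using s p sp nth_inj kL by metis
  show "vs ! ((k + 1) mod L) \<noteq> vs ! k" using s p sp nth_inj kL by metis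
  show "vs ! ((k + L - 1) mod L) \<noteq> vs ! k" using s p sp nth_inj kL by metis
  show "{vs ! k, vs ! ((k + 1) mod L)} \<in> cedges vs" unfolding cedges_def L_def using assms(2) by blast
  have "((k + L - 1) mod L + 1) mod L = k"
  proof -
    have "((k + L - 1) mod L + 1) mod L = (k + L - 1 + 1) mod L" by (simp add: mod_Suc_eq)
    also have "k + L - 1 + 1 = k + L" using L3 by simp
    finally show ?thesis using kL by simp
  qed
  then show "{vs ! ((k + L - 1) mod L), vs ! k} \<in> cedges vs" unfolding cedges_def L_def
    using sp p by (intro CollectI exI[of _ "(k + L - 1) mod L"]) (simp add: L_def)
qed

lemma cedges_sub: "e \<in> cedges vs \<Longrightarrow> e \<subseteq> set vs"
  unfolding cedges_def by (auto, metis length_greater_0_conv list.size(3) mod_less_divisor not_less_zero nth_mem)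

lemma cyc_deg:
  assumes "cyc E vs" "k < length vs"
  defines "L \<equiv> length vs"
  shows "{e \<in> cedges vs. vs ! k \<in> e} = {{vs ! k, vs ! ((k + 1) mod L)}, {vs ! ((k + L - 1) mod L), vs ! k}}"
    "card {e \<in> cedges vs. vs ! k \<in> e} = 2"
proof -
  have L3: "3 \<le> L" and d: "distinct vs" using assms unfolding cyc_def by auto
  have kL: "k < L" using assms by simp
  have nth_inj: "\<And>i j. i < L \<Longrightarrow> j < L \<Longrightarrow> vs ! i = vs ! j \<Longrightarrow> i = j"
    using d nth_eq_iff_index_eq unfolding L_def by blast
  note sp = cyc_succ_pred[OF assms(1,2), folded L_def]
  show eq: "{e \<in> cedges vs. vs ! k \<in> e} = {{vs ! k, vs ! ((k + 1) mod L)}, {vs ! ((k + L - 1) mod L), vs ! k}}"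
  proof (intro equalityI subsetI)
    fix e assume "e \<in> {e \<in> cedges vs. vs ! k \<in> e}"
    then obtain i where e: "e = {vs ! i, vs ! ((i + 1) mod L)}" "i < L" "vs ! k \<in> e"
      unfolding cedges_def L_def by blast
    have i1: "(i + 1) mod L < L" using L3 by simp
    show "e \<in> {{vs ! k, vs ! ((k + 1) mod L)}, {vs ! ((k + L - 1) mod L), vs ! k}}"
    proof (cases "vs ! k = vs ! i")
      case True then have "i = k" using nth_inj e kL by metis
      then show ?thesis using e by simp
    next
      case False then have "vs ! k = vs ! ((i + 1) mod L)" using e by auto
      then have ik: "(i + 1) mod L = k" using nth_inj i1 kL by metis
      have "i = (k + L - 1) mod L"
      proof (cases "i + 1 < L")
        case True then have "k = i + 1" using ik by simp
        then have "k + L - 1 = i + L" by simp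
        then show ?thesis using e(2) by simp
      next
        case False then have "i + 1 = L" using e by simp
        then have "k = 0" using ik by simp
        then show ?thesis using \<open>i + 1 = L\<close> by simp
      qed
      then show ?thesis using e ik by auto
    qed
  next
    fix e assume "e \<in> {{vs ! k, vs ! ((k + 1) mod L)}, {vs ! ((k + L - 1) mod L), vs ! k}}"
    then show "e \<in> {e \<in> cedges vs. vs ! k \<in> e}" using sp by auto
  qed
  have "{vs ! k, vs ! ((k + 1) mod L)} \<noteq> {vs ! ((k + L - 1) mod L), vs ! k}"
    using sp by (auto simp: doubleton_eq_iff)
  then show "card {e \<in> cedges vs. vs ! k \<in> e} = 2" unfolding eq by simp
qed

lemma cyc_deg2:
  assumes "cyc E vs" "x \<in> set vs"
  shows "card {e \<in> cedges vs. x \<in> e} = 2"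
  using cyc_deg(2)[OF assms(1)] assms(2) by (metis in_set_conv_nth)

lemma cyc_nbrs:
  assumes "cyc E vs" "x \<in> set vs" "\<And>q. {x, q} \<in> E \<Longrightarrow> q \<in> N"
  shows "\<exists>q1 q2. q1 \<noteq> q2 \<and> q1 \<in> N \<and> q2 \<in> N \<and> {x, q1} \<in> cedges vs \<and> {x, q2} \<in> cedges vs
     \<and> q1 \<in> set vs \<and> q2 \<in> set vs \<and> q1 \<noteq> x \<and> q2 \<noteq> x"
proof -
  obtain k where k: "k < length vs" "x = vs ! k" using assms(2) by (metis in_set_conv_nth)
  note sp = cyc_succ_pred[OF assms(1) k(1)]
  have CE: "cedges vs \<subseteq> E" using assms(1) unfolding cyc_def by simp
  define L where "L = length vs"
  have L3: "3 \<le> L" using assms(1) unfolding cyc_def L_def by simp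
  let ?q1 = "vs ! ((k + 1) mod L)" and ?q2 = "vs ! ((k + L - 1) mod L)"
  have "{x, ?q1} \<in> cedges vs" "{x, ?q2} \<in> cedges vs" using sp k L_def by (auto simp: insert_commute)
  moreover have "(k + 1) mod L < L" "(k + L - 1) mod L < L" using L3 by auto
  then have "?q1 \<in> set vs" "?q2 \<in> set vs" unfolding L_def by (simp_all only: nth_mem)
  moreover have "?q1 \<in> N" "?q2 \<in> N" using assms(3) CE calculation by auto
  ultimately show ?thesis using sp k L_def by blast
qed

lemma cyc_nbrs2:
  assumes "cyc E vs" "x \<in> set vs" "\<And>q. {x, q} \<in> E \<Longrightarrow> q = a \<or> q = b"
  shows "{x, a} \<in> cedges vs" "{x, b} \<in> cedges vs" "a \<in> set vs" "b \<in> set vs"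
proof -
  obtain q1 q2 where q: "q1 \<noteq> q2" "q1 \<in> {a,b}" "q2 \<in> {a,b}" "{x, q1} \<in> cedges vs" "{x, q2} \<in> cedges vs"
     "q1 \<in> set vs" "q2 \<in> set vs"
    using cyc_nbrs[OF assms(1,2), of "{a,b}"] assms(3) by blast
  then have "{q1, q2} = {a, b}" by auto
  then show "{x, a} \<in> cedges vs" "{x, b} \<in> cedges vs" "a \<in> set vs" "b \<in> set vs"
    using q by (auto simp: doubleton_eq_iff)
qed

lemma cyc_no_deg1:
  assumes "cyc E vs" "x \<in> set vs" "\<And>q. {x, q} \<in> E \<Longrightarrow> q = a"
  shows False
  using cyc_nbrs[OF assms(1,2), of "{a}"] assms(3) by blast


lemma card_cedges:
  assumes "cyc E vs"
  shows "card (cedges vs) = length vs"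
proof -
  define L where "L = length vs"
  have L3: "3 \<le> L" and d: "distinct vs" using assms unfolding cyc_def L_def by auto
  have nth_inj: "\<And>i j. i < L \<Longrightarrow> j < L \<Longrightarrow> vs ! i = vs ! j \<Longrightarrow> i = j"
    using d nth_eq_iff_index_eq unfolding L_def by blast
  define f where "f i = {vs ! i, vs ! ((i + 1) mod L)}" for i
  have img: "cedges vs = f ` {..<L}" unfolding cedges_def f_def L_def by auto
  have "inj_on f {..<L}"
  proof (rule inj_onI)
    fix i j assume ij: "i \<in> {..<L}" "j \<in> {..<L}" "f i = f j"
    have m: "(i + 1) mod L < L" "(j + 1) mod L < L" using L3 by auto
    show "i = j"
    proof (rule ccontr)
      assume "i \<noteq> j"
      then have "vs ! i \<noteq> vs ! j" using nth_inj ij by auto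
      then have "vs ! i = vs ! ((j + 1) mod L)" "vs ! ((i + 1) mod L) = vs ! j"
        using ij(3) unfolding f_def by (auto simp: doubleton_eq_iff)
      then have a: "i = (j + 1) mod L" "(i + 1) mod L = j" using nth_inj ij m by auto
      then have "((j + 1) mod L + 1) mod L = j" by simp
      then have "(j + 2) mod L = j" by (simp add: mod_Suc_eq)
      then show False
      proof (cases "j + 2 < L")
        case True then show ?thesis using \<open>(j + 2) mod L = j\<close> by simp
      next
        case False
        then have "j + 2 = (j + 2 - L) + L" by simp
        then have "(j + 2) mod L = (j + 2 - L) mod L" by (metis mod_add_self2)
        moreover have "j + 2 - L < L" using ij L3 by simp
        ultimately have "(j + 2) mod L = j + 2 - L" by simp
        then show False using \<open>(j + 2) mod L = j\<close> False L3 by simp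
      qed
    qed
  qed
  then have "card (f ` {..<L}) = L" by (simp add: card_image)
  then show ?thesis using img L_def by simp
qed


lemma cyc_even:
  assumes "cyc E vs" "\<forall>e\<in>E. card (e \<inter> A) = 1"
  shows "even (length vs)"
proof -
  define L where "L = length vs"
  have L3: "3 \<le> L" and d: "distinct vs" and CE: "cedges vs \<subseteq> E" using assms unfolding cyc_def L_def by auto
  have c1: "\<And>a b. a \<noteq> b \<Longrightarrow> card ({a, b} \<inter> A) = 1 \<Longrightarrow> (a \<in> A \<longleftrightarrow> b \<notin> A)"
  proof -
    fix a b :: nat assume ab: "a \<noteq> b" "card ({a, b} \<inter> A) = 1"
    show "(a \<in> A \<longleftrightarrow> b \<notin> A)"
    proof (cases "a \<in> A"; cases "b \<in> A")
      assume "a \<in> A" "b \<in> A" then have "{a,b} \<inter> A = {a,b}" by auto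
      then show ?thesis using ab by simp
    next
      assume "a \<notin> A" "b \<notin> A" then have "{a,b} \<inter> A = {}" by auto
      then show ?thesis using ab by simp
    qed auto
  qed
  have nth_inj: "\<And>i j. i < L \<Longrightarrow> j < L \<Longrightarrow> i \<noteq> j \<Longrightarrow> vs ! i \<noteq> vs ! j"
    using d nth_eq_iff_index_eq unfolding L_def by blast
  have step: "\<And>i. i < L \<Longrightarrow> (vs ! i \<in> A \<longleftrightarrow> vs ! ((i + 1) mod L) \<notin> A)"
  proof -
    fix i assume i: "i < L"
    have e: "{vs ! i, vs ! ((i + 1) mod L)} \<in> E" using CE i unfolding cedges_def L_def by blast
    have "(i + 1) mod L \<noteq> i"
    proof (cases "i + 1 < L")
      case True then show ?thesis by simp
    next
      case False then have "i + 1 = L" using i by simp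
      then show ?thesis using L3 by simp
    qed
    then have "vs ! i \<noteq> vs ! ((i + 1) mod L)" using nth_inj i L3 by simp
    then show "(vs ! i \<in> A \<longleftrightarrow> vs ! ((i + 1) mod L) \<notin> A)" using c1 assms(2) e by blast
  qed
  have alt: "\<And>i. i < L \<Longrightarrow> (vs ! i \<in> A \<longleftrightarrow> (vs ! 0 \<in> A \<longleftrightarrow> even i))"
  proof -
    fix i show "i < L \<Longrightarrow> (vs ! i \<in> A \<longleftrightarrow> (vs ! 0 \<in> A \<longleftrightarrow> even i))"
    proof (induction i)
      case 0 then show ?case by simp
    next
      case (Suc i)
      then have "(i + 1) mod L = Suc i" by simp
      then show ?case using step[of i] Suc by auto
    qed
  qed
  have "(L - 1 + 1) mod L = 0" using L3 by simp
  then have "vs ! (L - 1) \<in> A \<longleftrightarrow> vs ! 0 \<notin> A" using step[of "L - 1"] L3 by simp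
  then have "odd (L - 1)" using alt[of "L - 1"] L3 by auto
  then show ?thesis using L3 L_def by simp
qed


lemma cyc_rotate:
  assumes "cyc E vs" "w \<in> set vs"
  shows "\<exists>vs'. cyc E vs' \<and> cedges vs' = cedges vs \<and> set vs' = set vs \<and> last vs' = w"
proof -
  define L where "L = length vs"
  have L3: "3 \<le> L" and d: "distinct vs" using assms unfolding cyc_def L_def by auto
  obtain j where j: "j < L" "vs ! j = w" using assms(2) L_def by (metis in_set_conv_nth)
  define m where "m = Suc j"
  define vs' where "vs' = rotate m vs"
  have len: "length vs' = L" unfolding vs'_def L_def by simp
  have nthr: "\<And>i. i < L \<Longrightarrow> vs' ! i = vs ! ((m + i) mod L)" unfolding vs'_def L_def by (simp add: nth_rotate)
  have ce: "cedges vs' = cedges vs"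
  proof (intro equalityI subsetI)
    fix e assume "e \<in> cedges vs'"
    then obtain i where i: "i < L" "e = {vs' ! i, vs' ! ((i + 1) mod L)}" unfolding cedges_def len by blast
    have "(i + 1) mod L < L" using L3 by simp
    then have "vs' ! ((i + 1) mod L) = vs ! ((m + (i + 1) mod L) mod L)" using nthr by simp
    also have "(m + (i + 1) mod L) mod L = ((m + i) mod L + 1) mod L"
      by (simp add: mod_add_right_eq mod_Suc_eq)
    finally have "e = {vs ! ((m + i) mod L), vs ! (((m + i) mod L + 1) mod L)}"
      using i nthr by simp
    moreover have "(m + i) mod L < L" using L3 by simp
    ultimately show "e \<in> cedges vs" unfolding cedges_def L_def by blast
  next
    fix e assume "e \<in> cedges vs"
    then obtain t where t: "t < L" "e = {vs ! t, vs ! ((t + 1) mod L)}" unfolding cedges_def L_def by blast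
    define i where "i = (t + (L - m mod L)) mod L"
    have iL: "i < L" using L3 i_def by simp
    have mi: "(m + i) mod L = t"
    proof -
      have "(m + i) mod L = (m mod L + (t + (L - m mod L))) mod L" unfolding i_def by (metis mod_add_left_eq mod_add_right_eq)
      also have "m mod L + (t + (L - m mod L)) = t + L"
      proof -
        have "m mod L < L" using L3 by simp
        then show ?thesis by linarith
      qed
      finally show ?thesis using t by simp
    qed
    have "(i + 1) mod L < L" using L3 by simp
    then have "vs' ! ((i + 1) mod L) = vs ! ((m + (i + 1) mod L) mod L)" using nthr by simp
    also have "(m + (i + 1) mod L) mod L = ((m + i) mod L + 1) mod L"
      by (simp add: mod_add_right_eq mod_Suc_eq)
    finally have "{vs' ! i, vs' ! ((i + 1) mod L)} = {vs ! ((m + i) mod L), vs ! (((m + i) mod L + 1) mod L)}"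
      using iL nthr by simp
    then have "e = {vs' ! i, vs' ! ((i + 1) mod L)}" using t mi by simp
    then show "e \<in> cedges vs'" unfolding cedges_def len using iL by blast
  qed
  have "vs' \<noteq> []" using len L3 by auto
  then have "last vs' = vs' ! (L - 1)" using len by (simp add: last_conv_nth)
  also have "\<dots> = vs ! ((m + (L - 1)) mod L)" using nthr L3 by simp
  also have "m + (L - 1) = j + L" unfolding m_def using L3 by simp
  finally have "last vs' = w" using j by simp
  moreover have "cyc E vs'" using assms(1) ce unfolding cyc_def vs'_def by simp
  moreover have "set vs' = set vs" unfolding vs'_def by simp
  ultimately show ?thesis using ce by blast
qed

definition sg :: "nat set \<Rightarrow> nat set set \<Rightarrow> bool" where
  "sg V E \<longleftrightarrow> (\<forall>e\<in>E. \<exists>u v. e = {u, v} \<and> u \<noteq> v \<and> u \<in> V \<and> v \<in> V)"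

definition conn :: "nat set \<Rightarrow> nat set set \<Rightarrow> bool" where
  "conn V E \<longleftrightarrow> (\<forall>u\<in>V. \<forall>v\<in>V. \<exists>W. walk E W \<and> hd W = u \<and> last W = v)"

definition cact :: "nat set set \<Rightarrow> bool" where
  "cact E \<longleftrightarrow> (\<forall>e\<in>E. \<forall>vs1 vs2. cyc E vs1 \<and> cyc E vs2 \<and> e \<in> cedges vs1 \<and> e \<in> cedges vs2
      \<longrightarrow> cedges vs1 = cedges vs2)"

definition bip :: "nat set set \<Rightarrow> bool" where
  "bip E \<longleftrightarrow> (\<exists>A. \<forall>e\<in>E. card (e \<inter> A) = 1)"

definition reach :: "nat set set \<Rightarrow> nat \<Rightarrow> nat \<Rightarrow> nat set" where
  "reach E w x = {r. \<exists>W. walk E W \<and> hd W = x \<and> last W = r \<and> w \<notin> set W}"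

lemma sg_sub: "sg V E \<Longrightarrow> e \<in> E \<Longrightarrow> e \<subseteq> V"
proof -
  assume "sg V E" "e \<in> E"
  then obtain u v where "e = {u, v}" "u \<in> V" "v \<in> V" unfolding sg_def by meson
  then show "e \<subseteq> V" by simp
qed

lemma sg_edge: "sg V E \<Longrightarrow> {a, b} \<in> E \<Longrightarrow> a \<noteq> b \<and> a \<in> V \<and> b \<in> V"
proof -
  assume "sg V E" "{a, b} \<in> E"
  then obtain u v where "{a, b} = {u, v}" "u \<noteq> v" "u \<in> V" "v \<in> V" unfolding sg_def by meson
  then show ?thesis by (auto simp: doubleton_eq_iff)
qed

lemma walk_take: "walk E W \<Longrightarrow> 0 < k \<Longrightarrow> walk E (take k W)"
  by (metis append_take_drop_id walk_appendD1 take_eq_Nil walk_nonempty neq0_conv)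

lemma walk_restrict: "walk E W \<Longrightarrow> set W \<subseteq> S \<Longrightarrow> walk {e\<in>E. e \<subseteq> S} W"
proof -
  assume a: "walk E W" "set W \<subseteq> S"
  have "wedges W \<subseteq> {e\<in>E. e \<subseteq> S}" using a walk_wedges[of E W] wedges_subset_set[of _ W] by auto
  then show ?thesis using a walk_wedges by metis
qed


lemma wedges_rev: "wedges (rev xs) = wedges xs"
proof (induction xs)
  case (Cons x xs)
  show ?case
  proof (cases xs)
    case Nil then show ?thesis by simp
  next
    case (Cons y ys)
    have "wedges (rev (x # xs)) = wedges (rev xs @ [x])" by simp
    also have "\<dots> = insert {last (rev xs), x} (wedges (rev xs))" using wedges_snoc[of "rev xs" x] Cons by simp
    also have "\<dots> = insert {x, y} (wedges xs)" using Cons.IH Cons by (simp add: insert_commute)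
    finally show ?thesis using Cons by simp
  qed
qed simp

lemma wedges_join: "xs \<noteq> [] \<Longrightarrow> ys \<noteq> [] \<Longrightarrow> last xs = hd ys \<Longrightarrow> wedges (xs @ tl ys) = wedges xs \<union> wedges ys"
proof (induction xs)
  case (Cons x xs)
  show ?case
  proof (cases xs)
    case Nil
    then show ?thesis using Cons by (cases ys; cases "tl ys") auto
  next
    case (Cons y zs)
    then show ?thesis using Cons.IH Cons.prems by auto
  qed
qed simp


lemma conn_from_root:
  assumes "\<forall>u\<in>S. \<exists>W. walk F W \<and> hd W = r \<and> last W = u"
  shows "conn S F"
  unfolding conn_def
proof (intro ballI)
  fix u v assume uv: "u \<in> S" "v \<in> S"
  obtain Wu where Wu: "walk F Wu" "hd Wu = r" "last Wu = u" using assms uv by blast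
  obtain Wv where Wv: "walk F Wv" "hd Wv = r" "last Wv = v" using assms uv by blast
  have ne: "Wu \<noteq> []" "Wv \<noteq> []" using Wu Wv walk_nonempty by auto
  have "walk F (rev Wu)" "last (rev Wu) = hd Wv" "hd (rev Wu) = u" using walk_rev Wu Wv ne
    by (auto simp: hd_rev last_rev)
  then have "walk F (rev Wu @ tl Wv)" using walk_join Wv by blast
  moreover have "hd (rev Wu @ tl Wv) = u" using ne \<open>hd (rev Wu) = u\<close> by simp
  moreover have "last (rev Wu @ tl Wv) = v"
    using ne Wv \<open>last (rev Wu) = hd Wv\<close> by (cases Wv; cases "tl Wv") auto
  ultimately show "\<exists>W. walk F W \<and> hd W = u \<and> last W = v" by blast
qed

lemma walk_cross:
  assumes "walk E W" "hd W \<notin> S" "last W \<in> S"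
  shows "\<exists>a b. {a, b} \<in> E \<and> a \<notin> S \<and> b \<in> S"
  using assms
proof (induction E W rule: walk.induct)
  case (3 E x y xs)
  show ?case
  proof (cases "y \<in> S")
    case True then show ?thesis using 3 by auto
  next
    case False then show ?thesis using 3 by auto
  qed
qed auto


lemma walk_first_edge:
  assumes "walk E W" "hd W = a" "last W = b" "a \<noteq> b"
  shows "\<exists>c. {a, c} \<in> E"
proof -
  have "W \<noteq> []" using assms walk_nonempty by auto
  then obtain xs where W: "W = a # xs" using assms by (cases W) auto
  then have "xs \<noteq> []" using assms by auto
  then have "{a, hd xs} \<in> E" using assms(1) W walk_Cons by simp
  then show ?thesis by blast
qed

lemma reach_prefix:
  assumes "walk E W" "hd W = x" "w \<notin> set W"
  shows "set W \<subseteq> reach E w x"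
proof
  fix r assume "r \<in> set W"
  then obtain i where i: "i < length W" "W ! i = r" by (metis in_set_conv_nth)
  have "walk E (take (Suc i) W)" using walk_take assms by blast
  moreover have "hd (take (Suc i) W) = x" using assms i by (cases W) auto
  moreover have "last (take (Suc i) W) = r"
  proof -
    have "take (Suc i) W \<noteq> []" "length (take (Suc i) W) = Suc i" using i by auto
    then have "last (take (Suc i) W) = take (Suc i) W ! i" by (simp add: last_conv_nth)
    then show ?thesis using i by simp
  qed
  moreover have "w \<notin> set (take (Suc i) W)" using assms by (meson in_set_takeD)
  ultimately show "r \<in> reach E w x" unfolding reach_def by blast
qed


lemma reach_step:
  assumes "r \<in> reach E w x" "{r, q} \<in> E" "q \<noteq> w"
  shows "q \<in> reach E w x"
proof -
  obtain W where W: "walk E W" "hd W = x" "last W = r" "w \<notin> set W" using assms unfolding reach_def by blast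
  have ne: "W \<noteq> []" using W walk_nonempty by auto
  have "walk E (W @ [q])" using W ne assms by (simp add: walk_append)
  moreover have "hd (W @ [q]) = x" using W ne by simp
  moreover have "last (W @ [q]) = q" by simp
  moreover have "w \<notin> set (W @ [q])" using W assms by simp
  ultimately show ?thesis unfolding reach_def by blast
qed

lemma cyc_hd_last: "cyc E vs \<Longrightarrow> hd vs \<noteq> last vs"
proof -
  assume c: "cyc E vs"
  then have L3: "3 \<le> length vs" and d: "distinct vs" unfolding cyc_def by auto
  then have ne: "vs \<noteq> []" by auto
  then have "hd vs = vs ! 0" "last vs = vs ! (length vs - 1)" by (simp_all add: hd_conv_nth last_conv_nth)
  moreover have "vs ! 0 \<noteq> vs ! (length vs - 1)" using L3 d nth_eq_iff_index_eq by fastforce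
  ultimately show ?thesis by simp
qed

lemma cyc_set_sub: "sg V E \<Longrightarrow> cyc E vs \<Longrightarrow> set vs \<subseteq> V"
proof
  fix x assume a: "sg V E" "cyc E vs" "x \<in> set vs"
  then obtain k where k: "k < length vs" "x = vs ! k" by (metis in_set_conv_nth)
  have "{vs ! k, vs ! ((k + 1) mod length vs)} \<in> cedges vs" using cyc_succ_pred(4)[OF a(2) k(1)] by simp
  then have "{vs ! k, vs ! ((k + 1) mod length vs)} \<in> E" using a(2) unfolding cyc_def by auto
  then show "x \<in> V" using sg_sub[OF a(1)] k by auto
qed

lemma cyc_walk: "cyc E vs \<Longrightarrow> walk E vs"
proof -
  assume c: "cyc E vs"
  then have "vs \<noteq> []" "cedges vs \<subseteq> E" unfolding cyc_def by auto
  then show ?thesis using cedges_wedges walk_wedges by auto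
qed

lemma chord_contra:
  assumes cy: "cyc E vs" and lw: "last vs = w" and f: "{w, x} \<in> E" "{w, x} \<notin> cedges vs"
    and W: "walk E Wxy" "hd Wxy = x" "last Wxy = y" "w \<notin> set Wxy" and y: "y \<in> set vs" "y \<noteq> w"
    and ca: "cact E"
  shows False
proof -
  define L where "L = length vs"
  have L3: "3 \<le> L" and d: "distinct vs" and CE: "cedges vs \<subseteq> E" using cy unfolding cyc_def L_def by auto
  have ne: "vs \<noteq> []" using L3 L_def by auto
  obtain j where j: "j < L" "vs ! j = y" using y(1) L_def by (metis in_set_conv_nth)
  have lastv: "vs ! (L - 1) = w" using lw ne L_def by (simp add: last_conv_nth)
  have jL: "Suc j \<le> L - 1" using j y(2) lastv by (cases "j = L - 1") auto
  define arc where "arc = take (Suc j) vs"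
  have vsw: "walk E vs" using cyc_walk[OF cy] .
  have arc_walk: "walk E arc" unfolding arc_def using walk_take[OF vsw] by simp
  have arc_hd: "hd arc = hd vs" unfolding arc_def using ne by simp
  have arc_last: "last arc = y"
  proof -
    have "arc \<noteq> []" "length arc = Suc j" unfolding arc_def using j L_def by auto
    then have "last arc = arc ! j" by (simp add: last_conv_nth)
    then show ?thesis unfolding arc_def using j by simp
  qed
  have w_arc: "w \<notin> set arc"
  proof
    assume "w \<in> set arc"
    moreover have "w \<in> set (drop (Suc j) vs)"
    proof -
      have ee: "Suc j + (L - 1 - Suc j) = L - 1" using jL by simp
      have "Suc j \<le> length vs" using jL L_def by linarith
      then have "drop (Suc j) vs ! (L - 1 - Suc j) = vs ! (Suc j + (L - 1 - Suc j))"
        by (rule nth_drop)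
      then have "drop (Suc j) vs ! (L - 1 - Suc j) = vs ! (L - 1)" by (simp only: ee)
      moreover have "L - 1 - Suc j < length (drop (Suc j) vs)" using jL L_def L3 by simp
      ultimately show ?thesis using lastv by (metis nth_mem)
    qed
    ultimately show False using set_take_disj_set_drop_if_distinct[OF d, of "Suc j" "Suc j"] arc_def by auto
  qed
  define Wyx where "Wyx = rev Wxy"
  have Wne: "Wxy \<noteq> []" using W walk_nonempty by auto
  have Wyx: "walk E Wyx" "hd Wyx = y" "last Wyx = x" "w \<notin> set Wyx"
    unfolding Wyx_def using W Wne walk_rev by (auto simp: hd_rev last_rev)
  define W0 where "W0 = arc @ tl Wyx"
  have W0w: "walk E W0" unfolding W0_def using walk_join[OF arc_walk Wyx(1)] arc_last Wyx by simp
  have arc_ne: "arc \<noteq> []" unfolding arc_def using ne by simp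
  have W0hd: "hd W0 = hd vs" unfolding W0_def using arc_ne arc_hd by simp
  have W0last: "last W0 = x"
  proof (cases "tl Wyx = []")
    case True
    then have "Wyx = [y]" using Wyx Wne unfolding Wyx_def by (cases "rev Wxy") auto
    then have "x = y" using Wyx by simp
    then show ?thesis unfolding W0_def using True arc_last by simp
  next
    case False
    then have "last (tl Wyx) = last Wyx" by (metis last_tl)
    then show ?thesis unfolding W0_def using False Wyx by simp
  qed
  have w_W0: "w \<notin> set W0" unfolding W0_def using w_arc Wyx(4) by (metis Un_iff list.set_sel(2) set_append tl_Nil)
  have W0ne: "W0 \<noteq> []" using W0w walk_nonempty by auto
  define Wf where "Wf = W0 @ [w]"
  have Wfw: "walk E Wf" unfolding Wf_def using W0w W0ne W0last f by (simp add: walk_append insert_commute)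
  define F where "F = wedges Wf"
  have F: "F = insert {x, w} (wedges W0)" unfolding F_def Wf_def using wedges_snoc[OF W0ne] W0last by simp
  have FE: "F \<subseteq> E" unfolding F_def using Wfw walk_wedges by auto
  have WfF: "walk F Wf" unfolding F_def Wf_def by (simp add: walk_self)
  define e where "e = {w, hd vs}"
  have hdw: "hd vs \<noteq> w" using cyc_hd_last[OF cy] lw by simp
  have e_c: "e \<in> cedges vs" unfolding e_def using cedges_wedges[OF ne] lw by simp
  have eE: "e \<in> E" using e_c CE by auto
  have e_notF: "e \<notin> F"
  proof
    assume "e \<in> F"
    then show False
    proof (unfold F, elim insertE)
      assume "e = {x, w}"
      then have "hd vs = x" unfolding e_def using hdw by (auto simp: doubleton_eq_iff)
      then show False using f e_c e_def by (simp add: insert_commute)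
    next
      assume "e \<in> wedges W0"
      then have "w \<in> set W0" using wedges_subset_set e_def by blast
      then show False using w_W0 by simp
    qed
  qed
  obtain P where P: "cyc E P" "walk F P" "distinct P" "hd P = hd vs" "last P = w" "e \<in> cedges P"
      "cedges P = insert e (wedges P)"
    using walk_cycle[OF WfF _ _ FE _ eE e_notF, of "hd vs" w] W0hd Wf_def W0ne hdw e_def
    by (auto simp: insert_commute)
  have PL: "3 \<le> length P" using P unfolding cyc_def by simp
  define B where "B = butlast P"
  have Bne: "B \<noteq> []" unfolding B_def using PL by (cases P) auto
  have PB: "P = B @ [w]" unfolding B_def using P PL by (metis append_butlast_last_id list.size(3) not_numeral_le_zero)
  have "{last B, w} \<in> wedges P" using PB wedges_snoc[OF Bne] by simp
  moreover have "wedges P \<subseteq> F" using P walk_wedges by auto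
  ultimately have "{last B, w} \<in> F" by auto
  then have "{last B, w} = {x, w}"
  proof (unfold F, elim insertE)
    assume "{last B, w} \<in> wedges W0"
    then have "w \<in> set W0" using wedges_subset_set by blast
    then show ?thesis using w_W0 by simp
  qed
  then have "{w, x} \<in> cedges P" using \<open>{last B, w} \<in> wedges P\<close> P(7) by (auto simp: insert_commute)
  moreover have "cedges P = cedges vs" using ca eE cy P(1) e_c P(6) unfolding cact_def by metis
  ultimately show False using f by simp
qed

lemma twoconn_cycle:
  assumes sg: "sg V E" and cn: "conn V E" and ca: "cact E" and fin: "finite V" and c3: "3 \<le> card V"
    and H: "\<And>w x y. {w, x} \<in> E \<Longrightarrow> y \<in> V \<Longrightarrow> y \<noteq> w \<Longrightarrow> y \<in> reach E w x"
  shows "\<exists>vs. cyc E vs \<and> E = cedges vs \<and> set vs = V"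
proof -
  obtain a where a: "a \<in> V" using c3 by fastforce
  obtain b where b: "b \<in> V" "b \<noteq> a"
  proof -
    have "card (V - {a}) \<ge> 2" using c3 a fin by simp
    then have "V - {a} \<noteq> {}" by fastforce
    then show ?thesis using that by blast
  qed
  obtain Wab where "walk E Wab" "hd Wab = a" "last Wab = b" using cn a b unfolding conn_def by blast
  then obtain v where uv: "{a, v} \<in> E" using walk_first_edge b by metis
  define u where "u = a"
  have uv': "u \<noteq> v" "u \<in> V" "v \<in> V" using sg_edge[OF sg uv] u_def by auto
  obtain z where z: "z \<in> V" "z \<noteq> u" "z \<noteq> v"
  proof -
    have "card (V - {u, v}) \<ge> 1" using c3 uv' fin by (simp add: card_Diff_subset)
    then have "V - {u, v} \<noteq> {}" by fastforce
    then show ?thesis using that by blast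
  qed
  have e: "{u, v} \<in> E" using uv u_def by simp
  have e': "{v, u} \<in> E" using e by (simp add: insert_commute)
  obtain W1 where W1: "walk E W1" "hd W1 = v" "last W1 = z" "u \<notin> set W1"
    using H[OF e z(1,2)] unfolding reach_def by blast
  obtain W2 where W2: "walk E W2" "hd W2 = u" "last W2 = z" "v \<notin> set W2"
    using H[OF e' z(1,3)] unfolding reach_def by blast
  have ne: "W1 \<noteq> []" "W2 \<noteq> []" using W1 W2 walk_nonempty by auto
  define W where "W = W1 @ tl (rev W2)"
  have r2: "walk E (rev W2)" "hd (rev W2) = z" "last (rev W2) = u" "rev W2 \<noteq> []"
    using W2 ne walk_rev by (auto simp: hd_rev last_rev)
  have Ww: "walk E W" unfolding W_def using walk_join[OF W1(1) r2(1)] W1 r2 by simp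
  have Whd: "hd W = v" unfolding W_def using W1 ne by simp
  have Wlast: "last W = u"
  proof (cases "tl (rev W2) = []")
    case True
    then have "rev W2 = [z]" using r2 by (cases "rev W2") auto
    then have "u = z" using r2 by simp
    then show ?thesis using z by simp
  next
    case False
    then show ?thesis unfolding W_def using r2 by (metis last_appendR last_tl)
  qed
  have wW: "wedges W = wedges W1 \<union> wedges W2"
    unfolding W_def using wedges_join[OF ne(1) r2(4)] W1 r2 wedges_rev by simp
  have enot: "{u, v} \<notin> wedges W"
  proof
    assume "{u, v} \<in> wedges W"
    then show False unfolding wW
    proof
      assume "{u, v} \<in> wedges W1" then have "u \<in> set W1" using wedges_subset_set by blast
      then show False using W1 by simp
    next
      assume "{u, v} \<in> wedges W2" then have "v \<in> set W2" using wedges_subset_set by blast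
      then show False using W2 by simp
    qed
  qed
  have WF: "walk (wedges W) W" using walk_self Ww walk_nonempty by blast
  have FE: "wedges W \<subseteq> E" using Ww walk_wedges by blast
  obtain P where P: "cyc E P" "{u, v} \<in> cedges P"
    using walk_cycle[OF WF Whd Wlast FE _ e enot uv'(1)] by blast
  have PV: "set P \<subseteq> V" using cyc_set_sub[OF sg P(1)] .
  have CE: "cedges P \<subseteq> E" using P unfolding cyc_def by simp
  have sub: "E \<subseteq> cedges P"
  proof
    fix h assume h: "h \<in> E"
    show "h \<in> cedges P"
    proof (rule ccontr)
      assume hn: "h \<notin> cedges P"
      obtain p q where pq: "h = {p, q}" "p \<noteq> q" "p \<in> V" "q \<in> V" using sg h unfolding sg_def by meson
      have "\<exists>w' x'. {w', x'} \<in> E \<and> {w', x'} \<notin> cedges P \<and> w' \<in> set P"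
      proof (cases "p \<in> set P")
        case True
        have "{p, q} \<in> E" "{p, q} \<notin> cedges P" using h hn pq by auto
        then show ?thesis using True by blast
      next
        case pn: False
        show ?thesis
        proof (cases "q \<in> set P")
          case True
          have "{q, p} \<in> E" "{q, p} \<notin> cedges P" using h hn pq by (auto simp: insert_commute)
          then show ?thesis using True by blast
        next
          case False
          have Pne: "P \<noteq> []" using P unfolding cyc_def by auto
          then have "hd P \<in> V" using PV by auto
          then obtain Wp where Wp: "walk E Wp" "hd Wp = p" "last Wp = hd P" using cn pq unfolding conn_def by blast
          obtain a' b' where ab: "{a', b'} \<in> E" "a' \<notin> set P" "b' \<in> set P"
            using walk_cross[OF Wp(1), of "set P"] Wp pn Pne by auto
          have "{b', a'} \<notin> cedges P" using cedges_sub ab by blast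
          moreover have "{b', a'} \<in> E" using ab by (simp add: insert_commute)
          ultimately show ?thesis using ab by blast
        qed
      qed
      then obtain w' x' where wx: "{w', x'} \<in> E" "{w', x'} \<notin> cedges P" "w' \<in> set P" by blast
      obtain P' where P': "cyc E P'" "cedges P' = cedges P" "set P' = set P" "last P' = w'"
        using cyc_rotate[OF P(1) wx(3)] by blast
      have P'ne: "P' \<noteq> []" using P'(1) unfolding cyc_def by (metis list.size(3) not_numeral_le_zero)
      have y: "hd P' \<in> set P'" "hd P' \<noteq> w'" using P'ne cyc_hd_last[OF P'(1)] P'(4) by (simp_all add: hd_in_set)
      have "hd P' \<in> set P" using y(1) P'(3) by simp
      then have hV: "hd P' \<in> V" using PV by (meson subsetD)
      have "hd P' \<in> reach E w' x'" by (rule H[OF wx(1) hV y(2)])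
      then obtain Wxy where Wxy: "walk E Wxy" "hd Wxy = x'" "last Wxy = hd P'" "w' \<notin> set Wxy"
        unfolding reach_def by blast
      have "{w', x'} \<notin> cedges P'" using wx(2) P'(2) by simp
      then show False using chord_contra[OF P'(1) P'(4) wx(1) _ Wxy y ca] by blast
    qed
  qed
  then have EP: "E = cedges P" using CE by auto
  have "V \<subseteq> set P"
  proof
    fix x assume x: "x \<in> V"
    show "x \<in> set P"
    proof (rule ccontr)
      assume xn: "x \<notin> set P"
      have Pne: "P \<noteq> []" using P unfolding cyc_def by auto
      then have "hd P \<in> V" using PV by auto
      then obtain Wp where Wp: "walk E Wp" "hd Wp = x" "last Wp = hd P" using cn x unfolding conn_def by blast
      have "x \<noteq> hd P" using xn Pne by auto
      then obtain c where "{x, c} \<in> E" using walk_first_edge[OF Wp] by blast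
      then have "{x, c} \<subseteq> set P" using EP cedges_sub by blast
      then show False using xn by simp
    qed
  qed
  then show ?thesis using P EP PV by blast
qed

lemma sg_finite: "finite V \<Longrightarrow> sg V E \<Longrightarrow> finite E"
proof -
  assume "finite V" "sg V E"
  then have "E \<subseteq> Pow V" using sg_sub by blast
  then show "finite E" using \<open>finite V\<close> finite_subset by blast
qed

lemma split_graph:
  assumes sg: "sg V E" and cn: "conn V E" and fin: "finite V" and wx: "{w, x} \<in> E"
    and y: "y \<in> V" "y \<noteq> w" "y \<notin> reach E w x"
  defines "R \<equiv> reach E w x"
  defines "V1 \<equiv> V - R" and "V2 \<equiv> insert w R"
  defines "E1 \<equiv> {e\<in>E. e \<subseteq> V1}" and "E2 \<equiv> {e\<in>E. e \<subseteq> V2}"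
  shows "V1 \<union> V2 = V" "V1 \<inter> V2 = {w}" "E = E1 \<union> E2" "E1 \<inter> E2 = {}"
    "sg V1 E1" "sg V2 E2" "conn V1 E1" "conn V2 E2" "card E1 < card E" "card E2 < card E"
    "finite V1" "finite V2" "w \<in> V1" "w \<in> V2"
    "\<forall>v\<in>V1-{w}. gdeg E v = gdeg E1 v" "\<forall>v\<in>V2-{w}. gdeg E v = gdeg E2 v"
    "gdeg E w = gdeg E1 w + gdeg E2 w" "gdeg E1 w \<ge> 1" "gdeg E2 w \<ge> 1"
proof -
  have EV: "\<forall>e\<in>E. e \<subseteq> V" using sg_sub[OF sg] by blast
  have xw: "x \<noteq> w" "x \<in> V" "w \<in> V" using sg_edge[OF sg wx] by auto
  have finE: "finite E" using sg_finite[OF fin sg] .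
  have RV: "R \<subseteq> V"
  proof
    fix r assume "r \<in> R"
    then obtain W where W: "walk E W" "hd W = x" "last W = r" unfolding R_def reach_def by blast
    then have "set W \<subseteq> V" using walk_set_in EV xw by blast
    then show "r \<in> V" using W walk_nonempty last_in_set by blast
  qed
  have wR: "w \<notin> R"
  proof
    assume "w \<in> R"
    then obtain W where W: "walk E W" "last W = w" "w \<notin> set W" unfolding R_def reach_def by blast
    then show False using walk_nonempty last_in_set by metis
  qed
  have xR: "x \<in> R" unfolding R_def reach_def using xw by (intro CollectI exI[of _ "[x]"]) simp
  show V12: "V1 \<union> V2 = V" "V1 \<inter> V2 = {w}" unfolding V1_def V2_def using RV wR xw by auto
  show fV: "finite V1" "finite V2" using V12 fin by (metis finite_Un)+
  show wV: "w \<in> V1" "w \<in> V2" using V12 by auto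
  have Rstep: "\<And>p q. {p, q} \<in> E \<Longrightarrow> p \<in> R \<Longrightarrow> q \<in> V2"
    unfolding V2_def R_def using reach_step by blast
  show EU: "E = E1 \<union> E2"
  proof (intro equalityI subsetI)
    fix e assume e: "e \<in> E"
    then obtain p q where pq: "e = {p, q}" "p \<in> V" "q \<in> V" using sg unfolding sg_def by meson
    show "e \<in> E1 \<union> E2"
    proof (cases "p \<in> R \<or> q \<in> R")
      case True
      then have "p \<in> V2" "q \<in> V2" using Rstep[of p q] Rstep[of q p] e pq unfolding V2_def
        by (auto simp: insert_commute)
      then show ?thesis using e pq unfolding E2_def by auto
    next
      case False
      then have "p \<in> V1" "q \<in> V1" using pq unfolding V1_def by auto
      then show ?thesis using e pq unfolding E1_def by auto
    qed
  qed (auto simp: E1_def E2_def)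
  show dis: "E1 \<inter> E2 = {}"
  proof (rule ccontr)
    assume "E1 \<inter> E2 \<noteq> {}"
    then obtain e where e: "e \<in> E" "e \<subseteq> V1" "e \<subseteq> V2" unfolding E1_def E2_def by blast
    then obtain p q where pq: "e = {p, q}" "p \<noteq> q" using sg unfolding sg_def by meson
    then show False using e V12 by auto
  qed
  have sgr: "\<And>S. sg S {e\<in>E. e \<subseteq> S}"
    unfolding sg_def
  proof
    fix S e assume "e \<in> {e \<in> E. e \<subseteq> S}"
    then have e: "e \<in> E" "e \<subseteq> S" by auto
    then obtain u v where "e = {u, v}" "u \<noteq> v" using sg unfolding sg_def by meson
    then show "\<exists>u v. e = {u, v} \<and> u \<noteq> v \<and> u \<in> S \<and> v \<in> S" using e by blast
  qed
  show "sg V1 E1" "sg V2 E2" unfolding E1_def E2_def by (rule sgr)+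
  show cn2: "conn V2 E2"
  proof (rule conn_from_root[where r = x], intro ballI)
    fix u assume u: "u \<in> V2"
    show "\<exists>W. walk E2 W \<and> hd W = x \<and> last W = u"
    proof (cases "u = w")
      case True
      have "{x, w} \<in> E2" using wx xR unfolding E2_def V2_def by (auto simp: insert_commute)
      then show ?thesis using True by (intro exI[of _ "[x, w]"]) simp
    next
      case False
      then have "u \<in> R" using u unfolding V2_def by simp
      then obtain W where W: "walk E W" "hd W = x" "last W = u" "w \<notin> set W" unfolding R_def reach_def by blast
      have "set W \<subseteq> V2" using reach_prefix[OF W(1,2,4)] unfolding V2_def R_def by blast
      then show ?thesis using walk_restrict[OF W(1)] W unfolding E2_def by blast
    qed
  qed
  show cn1: "conn V1 E1"
  proof (rule conn_from_root[where r = w], intro ballI)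
    fix u assume u: "u \<in> V1"
    show "\<exists>W. walk E1 W \<and> hd W = w \<and> last W = u"
    proof (cases "u = w")
      case True then show ?thesis by (intro exI[of _ "[w]"]) simp
    next
      case False
      have uV: "u \<in> V" "u \<notin> R" using u unfolding V1_def by auto
      obtain W0 where W0: "walk E W0" "hd W0 = u" "last W0 = w" using cn uV xw unfolding conn_def by blast
      obtain P where P: "walk E P" "distinct P" "hd P = u" "last P = w"
        using walk_distinct[OF W0(1)] W0 by metis
      have Pne: "P \<noteq> []" using P walk_nonempty by auto
      have PV: "set P \<subseteq> V" using walk_set_in[OF P(1) EV] P uV by simp
      have PR: "set P \<inter> R = {}"
      proof (rule ccontr)
        assume "set P \<inter> R \<noteq> {}"
        then obtain i where i: "i < length P" "P ! i \<in> R" by (metis disjoint_iff in_set_conv_nth)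
        have lastP: "P ! (length P - 1) = w" using P Pne by (simp add: last_conv_nth)
        have il: "i < length P - 1" using i lastP wR by (cases "i = length P - 1") auto
        have wnot: "w \<notin> set (take (Suc i) P)"
        proof
          assume wt: "w \<in> set (take (Suc i) P)"
          have "w \<in> set (drop (Suc i) P)"
          proof -
            have "Suc i \<le> length P" using il by linarith
            then have "drop (Suc i) P ! (length P - 1 - Suc i) = P ! (Suc i + (length P - 1 - Suc i))"
              by (rule nth_drop)
            moreover have "Suc i + (length P - 1 - Suc i) = length P - 1" using il by linarith
            moreover have "length P - 1 - Suc i < length (drop (Suc i) P)" using il by simp
            ultimately show ?thesis using lastP by (metis nth_mem)
          qed
          then show False using wt set_take_disj_set_drop_if_distinct[OF P(2), of "Suc i" "Suc i"] by auto
        qed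
        define T where "T = take (Suc i) P"
        have Tw: "walk E T" "hd T = u" "last T = P ! i" "T \<noteq> []"
        proof -
          show "walk E T" unfolding T_def using walk_take[OF P(1)] by simp
          show "hd T = u" unfolding T_def using P Pne by simp
          have lT: "length T = Suc i" unfolding T_def using i by simp
          then show ne: "T \<noteq> []" by auto
          then have "last T = T ! i" using lT by (simp add: last_conv_nth)
          then show "last T = P ! i" unfolding T_def using i by simp
        qed
        obtain Wr where Wr: "walk E Wr" "hd Wr = x" "last Wr = P ! i" "w \<notin> set Wr"
          using i(2) unfolding R_def reach_def by blast
        have Wrne: "Wr \<noteq> []" using Wr walk_nonempty by auto
        have rT: "walk E (rev T)" "hd (rev T) = P ! i" "last (rev T) = u"
          using Tw walk_rev by (auto simp: hd_rev last_rev)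
        have "walk E (Wr @ tl (rev T))" using walk_join[OF Wr(1) rT(1)] Wr rT by simp
        moreover have "hd (Wr @ tl (rev T)) = x" using Wr Wrne by simp
        moreover have "last (Wr @ tl (rev T)) = u"
        proof (cases "tl (rev T) = []")
          case True
          then have "rev T = [P ! i]" using rT Tw by (cases "rev T") auto
          then show ?thesis using True Wr rT by simp
        next
          case False then show ?thesis using rT by (metis last_appendR last_tl)
        qed
        moreover have "w \<notin> set (Wr @ tl (rev T))"
          using Wr(4) wnot unfolding T_def by (metis Un_iff list.set_sel(2) set_append set_rev tl_Nil)
        ultimately have "u \<in> R" unfolding R_def reach_def by blast
        then show False using uV by simp
      qed
      have "set P \<subseteq> V1" using PV PR unfolding V1_def by auto
      then have "walk E1 P" using walk_restrict[OF P(1)] unfolding E1_def by blast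
      then have "walk E1 (rev P)" "hd (rev P) = w" "last (rev P) = u"
        using walk_rev P Pne by (auto simp: hd_rev last_rev)
      then show ?thesis by blast
    qed
  qed
  have wxE2: "{w, x} \<in> E2" using wx xR unfolding E2_def V2_def by auto
  have yV1: "y \<in> V1" using y unfolding V1_def R_def by simp
  obtain Wy where Wy: "walk E1 Wy" "hd Wy = w" "last Wy = y" using cn1 yV1 wV unfolding conn_def by blast
  obtain c where c: "{w, c} \<in> E1" using walk_first_edge[OF Wy] y by blast
  have E1sub: "E1 \<subseteq> E" "E2 \<subseteq> E" unfolding E1_def E2_def by auto
  show "card E1 < card E"
  proof (rule psubset_card_mono[OF finE])
    show "E1 \<subset> E" using E1sub wxE2 dis wx by blast
  qed
  show "card E2 < card E"
  proof (rule psubset_card_mono[OF finE])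
    show "E2 \<subset> E" using E1sub c dis by blast
  qed
  show "\<forall>v\<in>V1-{w}. gdeg E v = gdeg E1 v"
  proof
    fix v assume v: "v \<in> V1 - {w}"
    have "{e\<in>E. v \<in> e} = {e\<in>E1. v \<in> e}" using v V12 EU unfolding E2_def by blast
    then show "gdeg E v = gdeg E1 v" unfolding gdeg_def by simp
  qed
  show "\<forall>v\<in>V2-{w}. gdeg E v = gdeg E2 v"
  proof
    fix v assume v: "v \<in> V2 - {w}"
    have "{e\<in>E. v \<in> e} = {e\<in>E2. v \<in> e}" using v V12 EU unfolding E1_def by blast
    then show "gdeg E v = gdeg E2 v" unfolding gdeg_def by simp
  qed
  have "{e\<in>E. w \<in> e} = {e\<in>E1. w \<in> e} \<union> {e\<in>E2. w \<in> e}" using EU by blast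
  moreover have "finite {e\<in>E1. w \<in> e}" "finite {e\<in>E2. w \<in> e}" using finE E1sub by (auto intro: finite_subset)
  moreover have "{e\<in>E1. w \<in> e} \<inter> {e\<in>E2. w \<in> e} = {}" using dis by blast
  ultimately show "gdeg E w = gdeg E1 w + gdeg E2 w" unfolding gdeg_def by (simp add: card_Un_disjoint)
  have "{w, c} \<in> {e\<in>E1. w \<in> e}" using c by simp
  then show "gdeg E1 w \<ge> 1" unfolding gdeg_def using finE E1sub
    by (metis (no_types, lifting) One_nat_def Suc_leI card_gt_0_iff empty_iff finite_subset mem_Collect_eq subsetI)
  have "{w, x} \<in> {e\<in>E2. w \<in> e}" using wxE2 by simp
  then show "gdeg E2 w \<ge> 1" unfolding gdeg_def using finE E1sub
    by (metis (no_types, lifting) One_nat_def Suc_leI card_gt_0_iff empty_iff finite_subset mem_Collect_eq subsetI)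
qed

definition ineq1 :: "nat set \<Rightarrow> nat \<Rightarrow> (nat \<Rightarrow> nat) \<Rightarrow> nat \<Rightarrow> bool" where
  "ineq1 V m g z \<longleftrightarrow> 3 * m + 4 + card {v\<in>V. v \<noteq> z \<and> g v = 1} \<le> 4 * card V"

definition ineq2 :: "nat set \<Rightarrow> nat \<Rightarrow> (nat \<Rightarrow> nat) \<Rightarrow> bool" where
  "ineq2 V m g \<longleftrightarrow> 6 * m + card {v\<in>V. odd (g v)} + 8 \<le> 8 * card V"

lemma card_sub_Un: "finite A \<Longrightarrow> finite B \<Longrightarrow> S \<subseteq> A \<union> B \<Longrightarrow> card S \<le> card A + card B"
proof -
  assume a: "finite A" "finite B" "S \<subseteq> A \<union> B"
  have "card S \<le> card (A \<union> B)" using a by (intro card_mono) auto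
  also have "\<dots> \<le> card A + card B" by (rule card_Un_le)
  finally show ?thesis .
qed

lemma finite_sep: "finite A \<Longrightarrow> finite {v\<in>A. P v}"
  by simp

lemma combine:
  assumes fin: "finite V1" "finite V2" and V: "V = V1 \<union> V2" "V1 \<inter> V2 = {w}" and m: "m = m1 + m2"
    and d1: "\<forall>v\<in>V1-{w}. g v = g1 v" and d2: "\<forall>v\<in>V2-{w}. g v = g2 v"
    and dw: "g w = g1 w + g2 w" "g1 w \<ge> 1" "g2 w \<ge> 1"
    and I1: "\<forall>z\<in>V1. ineq1 V1 m1 g1 z" and I2: "\<forall>z\<in>V2. ineq1 V2 m2 g2 z"
    and O1: "ineq2 V1 m1 g1" and O2: "ineq2 V2 m2 g2"
  shows "\<forall>z\<in>V. ineq1 V m g z" "ineq2 V m g"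
proof -
  have cV: "card V + 1 = card V1 + card V2" using card_Un_Int[OF fin] V by simp
  have wV: "w \<in> V1" "w \<in> V2" using V by auto
  show "\<forall>z\<in>V. ineq1 V m g z"
  proof
    fix z assume z: "z \<in> V"
    obtain z1 z2 where zz: "z1 \<in> V1" "z2 \<in> V2" "(z1 = z \<and> z2 = w) \<or> (z1 = w \<and> z2 = z)"
    proof (cases "z \<in> V1")
      case True then show ?thesis using that[of z w] wV(2) by blast
    next
      case False then have "z \<in> V2" using z V by blast
      then show ?thesis using that[of w z] wV(1) by blast
    qed
    have sub: "{v\<in>V. v \<noteq> z \<and> g v = 1} \<subseteq> {v\<in>V1. v \<noteq> z1 \<and> g1 v = 1} \<union> {v\<in>V2. v \<noteq> z2 \<and> g2 v = 1}"
    proof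
      fix v assume v: "v \<in> {v\<in>V. v \<noteq> z \<and> g v = 1}"
      then have v1: "v \<in> V" "v \<noteq> z" "g v = 1" by auto
      then have vw: "v \<noteq> w" using dw by auto
      have vz: "v \<noteq> z1" "v \<noteq> z2" using zz(3) v1(2) vw by blast+
      show "v \<in> {v\<in>V1. v \<noteq> z1 \<and> g1 v = 1} \<union> {v\<in>V2. v \<noteq> z2 \<and> g2 v = 1}"
      proof (cases "v \<in> V1")
        case True
        then have "g1 v = 1" using v1 vw d1 by simp
        then show ?thesis using True vz by simp
      next
        case False then have v2: "v \<in> V2" using v1 V by blast
        then have "g2 v = 1" using v1 vw d2 by simp
        then show ?thesis using v2 vz by simp
      qed
    qed
    have "card {v\<in>V. v \<noteq> z \<and> g v = 1} \<le> card {v\<in>V1. v \<noteq> z1 \<and> g1 v = 1} + card {v\<in>V2. v \<noteq> z2 \<and> g2 v = 1}"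
      by (rule card_sub_Un[OF _ _ sub]) (simp_all add: fin)
    moreover have "ineq1 V1 m1 g1 z1" "ineq1 V2 m2 g2 z2" using I1 I2 zz by auto
    ultimately show "ineq1 V m g z" using cV m unfolding ineq1_def by linarith
  qed
  have sub2: "{v\<in>V. odd (g v)} \<subseteq> {v\<in>V1. odd (g1 v)} \<union> {v\<in>V2. odd (g2 v)}"
  proof
    fix v assume v: "v \<in> {v\<in>V. odd (g v)}"
    show "v \<in> {v\<in>V1. odd (g1 v)} \<union> {v\<in>V2. odd (g2 v)}"
    proof (cases "v = w")
      case True then show ?thesis using v dw wV by auto
    next
      case vw: False
      show ?thesis
      proof (cases "v \<in> V1")
        case True then show ?thesis using v vw d1 by auto
      next
        case False then have "v \<in> V2" using v V by auto
        then show ?thesis using v vw d2 by auto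
      qed
    qed
  qed
  have "card {v\<in>V. odd (g v)} \<le> card {v\<in>V1. odd (g1 v)} + card {v\<in>V2. odd (g2 v)}"
    by (rule card_sub_Un[OF _ _ sub2]) (simp_all add: fin)
  then show "ineq2 V m g" using O1 O2 cV m unfolding ineq2_def by linarith
qed

lemma cyc_mono: "cyc F vs \<Longrightarrow> F \<subseteq> E \<Longrightarrow> cyc E vs"
  unfolding cyc_def by auto

lemma cact_mono: "cact E \<Longrightarrow> F \<subseteq> E \<Longrightarrow> cact F"
  unfolding cact_def
proof (intro ballI allI impI)
  fix e vs1 vs2
  assume a: "\<forall>e\<in>E. \<forall>vs1 vs2. cyc E vs1 \<and> cyc E vs2 \<and> e \<in> cedges vs1 \<and> e \<in> cedges vs2 \<longrightarrow> cedges vs1 = cedges vs2"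
    "F \<subseteq> E" "e \<in> F" "cyc F vs1 \<and> cyc F vs2 \<and> e \<in> cedges vs1 \<and> e \<in> cedges vs2"
  then have "cyc E vs1" "cyc E vs2" "e \<in> E" using cyc_mono by auto
  then show "cedges vs1 = cedges vs2" using a by blast
qed

lemma bip_mono: "bip E \<Longrightarrow> F \<subseteq> E \<Longrightarrow> bip F"
  unfolding bip_def by blast

lemma main_ineq:
  assumes "finite V" "V \<noteq> {}" "sg V E" "conn V E" "cact E" "bip E"
  shows "(\<forall>z\<in>V. ineq1 V (card E) (gdeg E) z) \<and> ineq2 V (card E) (gdeg E)"
  using assms
proof (induction "card E" arbitrary: V E rule: less_induct)
  case less
  have fin: "finite V" and sg: "sg V E" and cn: "conn V E" and ca: "cact E" and bi: "bip E"
    using less.prems by auto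
  show ?case
  proof (cases "\<exists>w x y. {w, x} \<in> E \<and> y \<in> V \<and> y \<noteq> w \<and> y \<notin> reach E w x")
    case True
    then obtain w x y where wx: "{w, x} \<in> E" and y: "y \<in> V" "y \<noteq> w" "y \<notin> reach E w x" by blast
    define V1 where "V1 = V - reach E w x"
    define V2 where "V2 = insert w (reach E w x)"
    define E1 where "E1 = {e\<in>E. e \<subseteq> V1}"
    define E2 where "E2 = {e\<in>E. e \<subseteq> V2}"
    note S = split_graph[OF sg cn fin wx y, folded V1_def V2_def, folded E1_def E2_def]
    have E1E: "E1 \<subseteq> E" "E2 \<subseteq> E" unfolding E1_def E2_def by auto
    have IH1: "(\<forall>z\<in>V1. ineq1 V1 (card E1) (gdeg E1) z) \<and> ineq2 V1 (card E1) (gdeg E1)"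
      using less(1)[OF S(9) S(11) _ S(5) S(7) cact_mono[OF ca E1E(1)] bip_mono[OF bi E1E(1)]] S(13) by blast
    have IH2: "(\<forall>z\<in>V2. ineq1 V2 (card E2) (gdeg E2) z) \<and> ineq2 V2 (card E2) (gdeg E2)"
      using less(1)[OF S(10) S(12) _ S(6) S(8) cact_mono[OF ca E1E(2)] bip_mono[OF bi E1E(2)]] S(14) by blast
    have finE: "finite E" using sg_finite[OF fin sg] .
    have m: "card E = card E1 + card E2"
    proof -
      have "finite E1" "finite E2" using finE E1E by (auto intro: finite_subset)
      then show ?thesis using S(3) S(4) card_Un_disjoint by metis
    qed
    show ?thesis
      using combine[OF S(11) S(12) S(1)[symmetric] S(2) m S(15) S(16) S(17) S(18) S(19)] IH1 IH2 by blast
  next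
    case False
    then have H: "\<And>w x y. {w, x} \<in> E \<Longrightarrow> y \<in> V \<Longrightarrow> y \<noteq> w \<Longrightarrow> y \<in> reach E w x" by blast
    have cpos: "card V \<ge> 1" using fin less.prems(2) by (simp add: Suc_leI card_gt_0_iff)
    consider "card V = 1" | "card V = 2" | "card V \<ge> 3" using cpos by linarith
    then show ?thesis
    proof cases
      case 1
      then obtain a where Va: "V = {a}" using card_1_singletonE by blast
      have E0: "E = {}"
      proof (rule ccontr)
        assume "E \<noteq> {}"
        then obtain e where "e \<in> E" by blast
        then obtain u v where "u \<noteq> v" "u \<in> V" "v \<in> V" using sg unfolding sg_def by meson
        then show False using Va by simp
      qed
      have "gdeg E a = 0" unfolding gdeg_def E0 by simp
      then show ?thesis unfolding ineq1_def ineq2_def using Va E0 by simp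
    next
      case 2
      then obtain a b where Vab: "V = {a, b}" "a \<noteq> b" by (meson card_2_iff)
      have Esub: "E \<subseteq> {{a, b}}"
      proof
        fix e assume "e \<in> E"
        then obtain u v where "e = {u, v}" "u \<noteq> v" "u \<in> V" "v \<in> V" using sg unfolding sg_def by meson
        then show "e \<in> {{a, b}}" using Vab by auto
      qed
      obtain W where "walk E W" "hd W = a" "last W = b" using cn Vab unfolding conn_def by blast
      then obtain c where "{a, c} \<in> E" using walk_first_edge Vab(2) by metis
      then have Eeq: "E = {{a, b}}" using Esub by auto
      have cE: "card E = 1" using Eeq by simp
      have "\<forall>z\<in>V. card {v\<in>V. v \<noteq> z \<and> gdeg E v = 1} \<le> 1"
      proof
        fix z assume z: "z \<in> V"
        have "{v\<in>V. v \<noteq> z \<and> gdeg E v = 1} \<subseteq> V - {z}" by auto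
        moreover have "card (V - {z}) = 1" using z 2 fin by simp
        ultimately show "card {v\<in>V. v \<noteq> z \<and> gdeg E v = 1} \<le> 1" using fin
          by (metis card_mono finite_Diff)
      qed
      moreover have "card {v\<in>V. odd (gdeg E v)} \<le> 2" using 2 fin
        by (metis (no_types, lifting) card_mono mem_Collect_eq subsetI)
      ultimately show ?thesis unfolding ineq1_def ineq2_def using cE 2 by auto
    next
      case 3
      obtain vs where vs: "cyc E vs" "E = cedges vs" "set vs = V"
        using twoconn_cycle[OF sg cn ca fin 3 H] by blast
      have cE: "card E = length vs" using card_cedges[OF vs(1)] vs(2) by simp
      have cV: "card V = length vs" using vs unfolding cyc_def by (metis distinct_card)
      have d2: "\<forall>v\<in>V. gdeg E v = 2" unfolding gdeg_def using cyc_deg2[OF vs(1)] vs by simp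
      obtain A where A: "\<forall>e\<in>E. card (e \<inter> A) = 1" using bi unfolding bip_def by blast
      have ev: "even (length vs)" using cyc_even[OF vs(1) A] .
      have "length vs \<ge> 3" using vs unfolding cyc_def by simp
      then have L4: "length vs \<ge> 4" using ev by presburger
      have e1: "{v\<in>V. v \<noteq> z \<and> gdeg E v = 1} = {}" for z using d2 by auto
      have e2: "{v\<in>V. odd (gdeg E v)} = {}" using d2 by auto
      show ?thesis unfolding ineq1_def ineq2_def e1 e2 card.empty using cE cV L4 by simp
    qed
  qed
qed

definition bc :: "nat set \<Rightarrow> nat set set \<Rightarrow> bool" where
  "bc V E \<longleftrightarrow> finite V \<and> V \<noteq> {} \<and> sg V E \<and> conn V E \<and> cact E \<and> bip E"

lemma conn_mono: "conn V E \<Longrightarrow> E \<subseteq> F \<Longrightarrow> conn V F"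
  unfolding conn_def using walk_mono by metis

lemma conn_add:
  assumes "conn V E" "v \<in> V"
  shows "conn (insert w V) (insert {v, w} E)"
proof (rule conn_from_root[where r = v], intro ballI)
  fix u assume u: "u \<in> insert w V"
  show "\<exists>W. walk (insert {v, w} E) W \<and> hd W = v \<and> last W = u"
  proof (cases "u = w")
    case True then show ?thesis by (intro exI[of _ "[v, w]"]) simp
  next
    case False
    then have "u \<in> V" using u by simp
    then obtain W where "walk E W" "hd W = v" "last W = u" using assms unfolding conn_def by blast
    then show ?thesis using walk_mono[of E W "insert {v, w} E"] by blast
  qed
qed

lemma bc_single: "bc {a} {}"
  unfolding bc_def sg_def cact_def bip_def conn_def
  by (auto intro!: exI[of _ "[a]"])

lemma edges_avoid: "sg V E \<Longrightarrow> w \<notin> V \<Longrightarrow> e \<in> E \<Longrightarrow> w \<notin> e"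
  using sg_sub by blast

lemma bc_leaf:
  assumes bc: "bc V E" and v: "v \<in> V" and w: "w \<notin> V"
  shows "bc (insert w V) (insert {v, w} E)"
proof -
  have fin: "finite V" and sg: "sg V E" and cn: "conn V E" and ca: "cact E" and bi: "bip E"
    using bc unfolding bc_def by auto
  have vw: "v \<noteq> w" using v w by auto
  let ?E = "insert {v, w} E"
  have sg': "sg (insert w V) ?E" using sg vw v unfolding sg_def by blast
  have cn': "conn (insert w V) ?E" using conn_add[OF cn v] .
  have avoid: "\<And>vs. cyc ?E vs \<Longrightarrow> cyc E vs"
  proof -
    fix vs assume c: "cyc ?E vs"
    have "w \<notin> set vs"
    proof
      assume "w \<in> set vs"
      moreover have "\<And>q. {w, q} \<in> ?E \<Longrightarrow> q = v"
      proof -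
        fix q assume "{w, q} \<in> ?E"
        then show "q = v"
        proof
          assume "{w, q} = {v, w}" then show "q = v" using vw by (auto simp: doubleton_eq_iff)
        next
          assume "{w, q} \<in> E" then show "q = v" using edges_avoid[OF sg w] by blast
        qed
      qed
      ultimately show False using cyc_no_deg1[OF c] by blast
    qed
    then have "cedges vs \<subseteq> E"
      using c cedges_sub unfolding cyc_def by fastforce
    then show "cyc E vs" using c unfolding cyc_def by simp
  qed
  have ca': "cact ?E"
    unfolding cact_def
  proof (intro ballI allI impI)
    fix e vs1 vs2 assume a: "e \<in> ?E" "cyc ?E vs1 \<and> cyc ?E vs2 \<and> e \<in> cedges vs1 \<and> e \<in> cedges vs2"
    then have c: "cyc E vs1" "cyc E vs2" using avoid by auto
    then have "e \<in> E" using a unfolding cyc_def by auto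
    then show "cedges vs1 = cedges vs2" using ca c a unfolding cact_def by blast
  qed
  obtain A where A: "\<forall>e\<in>E. card (e \<inter> A) = 1" using bi unfolding bip_def by blast
  define A' where "A' = (A \<inter> V) \<union> (if v \<in> A then {} else {w})"
  have "\<forall>e\<in>?E. card (e \<inter> A') = 1"
  proof
    fix e assume e: "e \<in> ?E"
    show "card (e \<inter> A') = 1"
    proof (cases "e = {v, w}")
      case True
      show ?thesis
      proof (cases "v \<in> A")
        case True
        then have "{v, w} \<inter> A' = {v}" unfolding A'_def using v w by auto
        then show ?thesis using \<open>e = {v, w}\<close> by simp
      next
        case False
        then have "{v, w} \<inter> A' = {w}" unfolding A'_def using v w by auto
        then show ?thesis using \<open>e = {v, w}\<close> by simp
      qed
    next
      case False
      then have eE: "e \<in> E" using e by simp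
      then have "e \<subseteq> V" using sg_sub[OF sg] by blast
      then have "e \<inter> A' = e \<inter> A" unfolding A'_def using w by auto
      then show ?thesis using A eE by simp
    qed
  qed
  then have "bip ?E" unfolding bip_def by blast
  then show ?thesis unfolding bc_def using fin sg' cn' ca' by simp
qed

lemma cyc_conn: "cyc E vs \<Longrightarrow> conn (set vs) (cedges vs)"
proof (rule conn_from_root[where r = "hd vs"], intro ballI)
  fix u assume c: "cyc E vs" and u: "u \<in> set vs"
  then obtain j where j: "j < length vs" "vs ! j = u" by (metis in_set_conv_nth)
  have ne: "vs \<noteq> []" using u by auto
  have "walk (cedges vs) vs" using walk_self[OF ne] cedges_wedges[OF ne] walk_mono by blast
  then have "walk (cedges vs) (take (Suc j) vs)" using walk_take by blast
  moreover have "hd (take (Suc j) vs) = hd vs" using ne by simp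
  moreover have "last (take (Suc j) vs) = u"
  proof -
    have lT: "length (take (Suc j) vs) = Suc j" using j by simp
    then have "take (Suc j) vs \<noteq> []" by auto
    then have "last (take (Suc j) vs) = take (Suc j) vs ! j" using lT by (simp add: last_conv_nth)
    then show ?thesis using j by simp
  qed
  ultimately show "\<exists>W. walk (cedges vs) W \<and> hd W = hd vs \<and> last W = u" by blast
qed

lemma c4_cycle:
  assumes c: "cyc E' vs"
    and Na: "\<And>q. {a, q} \<in> E' \<Longrightarrow> q = v \<or> q = b"
    and Nb: "\<And>q. {b, q} \<in> E' \<Longrightarrow> q = a \<or> q = c"
    and Nc: "\<And>q. {c, q} \<in> E' \<Longrightarrow> q = b \<or> q = v"
    and dist: "a \<noteq> c"
    and E'sub: "\<And>e. e \<in> E' \<Longrightarrow> e \<subseteq> {v, a, b, c} \<Longrightarrow> e \<in> {{v, a}, {a, b}, {b, c}, {c, v}}"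
    and new: "a \<in> set vs \<or> b \<in> set vs \<or> c \<in> set vs"
  shows "cedges vs = {{v, a}, {a, b}, {b, c}, {c, v}}"
proof -
  let ?C = "{{v, a}, {a, b}, {b, c}, {c, v}}"
  let ?S = "{v, a, b, c}"
  have CE: "cedges vs \<subseteq> E'" using c unfolding cyc_def by simp
  have bset: "b \<in> set vs"
  proof -
    { assume "a \<in> set vs" then have "b \<in> set vs" using cyc_nbrs2(4)[OF c _ Na] by blast }
    moreover { assume "c \<in> set vs" then have "b \<in> set vs" using cyc_nbrs2(3)[OF c _ Nc] by blast }
    ultimately show ?thesis using new by blast
  qed
  have aset: "a \<in> set vs" and cset: "c \<in> set vs" using cyc_nbrs2(3,4)[OF c bset Nb] by auto
  have e1: "{a, v} \<in> cedges vs" "{a, b} \<in> cedges vs" using cyc_nbrs2(1,2)[OF c aset Na] by auto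
  have e2: "{b, c} \<in> cedges vs" using cyc_nbrs2(2)[OF c bset Nb] by auto
  have e3: "{c, v} \<in> cedges vs" using cyc_nbrs2(2)[OF c cset Nc] by auto
  have vset: "v \<in> set vs" using cyc_nbrs2(3)[OF c aset Na] .
  have Csub: "?C \<subseteq> cedges vs" using e1 e2 e3 by (auto simp: insert_commute)
  have vdeg: "{e \<in> cedges vs. v \<in> e} = {{v, a}, {c, v}}"
  proof -
    have "{{v, a}, {c, v}} \<subseteq> {e \<in> cedges vs. v \<in> e}" using Csub by auto
    moreover have "card {e \<in> cedges vs. v \<in> e} = 2" using cyc_deg2[OF c vset] .
    moreover have "card {{v, a}, {c, v}} = 2" using dist by (auto simp: doubleton_eq_iff)
    moreover have "finite {e \<in> cedges vs. v \<in> e}" using \<open>card {e \<in> cedges vs. v \<in> e} = 2\<close>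
      by (metis card.infinite zero_neq_numeral)
    ultimately show ?thesis by (metis card_subset_eq)
  qed
  have atS: "\<And>x e. x \<in> ?S \<Longrightarrow> e \<in> cedges vs \<Longrightarrow> x \<in> e \<Longrightarrow> e \<subseteq> ?S"
  proof -
    fix x e assume x: "x \<in> ?S" and e: "e \<in> cedges vs" "x \<in> e"
    obtain i where i: "i < length vs" "e = {vs ! i, vs ! ((i + 1) mod length vs)}" using e unfolding cedges_def by blast
    then obtain q where q: "e = {x, q}" using e by auto
    have eE: "e \<in> E'" using e CE by auto
    show "e \<subseteq> ?S"
    proof -
      have "x = v \<or> x = a \<or> x = b \<or> x = c" using x by simp
      then show ?thesis
      proof (elim disjE)
        assume "x = v" then show ?thesis using vdeg e by auto
      next
        assume "x = a" then show ?thesis using Na[of q] eE q by auto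
      next
        assume "x = b" then show ?thesis using Nb[of q] eE q by auto
      next
        assume "x = c" then show ?thesis using Nc[of q] eE q by auto
      qed
    qed
  qed
  have setS: "set vs \<subseteq> ?S"
  proof
    fix y assume y: "y \<in> set vs"
    show "y \<in> ?S"
    proof (rule ccontr)
      assume yn: "y \<notin> ?S"
      obtain W where W: "walk (cedges vs) W" "hd W = y" "last W = a"
        using cyc_conn[OF c] y aset unfolding conn_def by blast
      obtain p q where pq: "{p, q} \<in> cedges vs" "p \<notin> ?S" "q \<in> ?S"
        using walk_cross[OF W(1), of ?S] W yn by auto
      then have "{p, q} \<subseteq> ?S" using atS[of q "{p, q}"] by simp
      then show False using pq by simp
    qed
  qed
  have "cedges vs \<subseteq> ?C"
  proof
    fix e assume e: "e \<in> cedges vs"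
    then have "e \<subseteq> ?S" using cedges_sub setS by blast
    then show "e \<in> ?C" using E'sub e CE by blast
  qed
  then show ?thesis using Csub by blast
qed

lemma bc_c4:
  assumes bc: "bc V E" and v: "v \<in> V" and new: "a \<notin> V" "b \<notin> V" "c \<notin> V" and d: "a \<noteq> b" "b \<noteq> c" "a \<noteq> c"
  shows "bc (insert c (insert b (insert a V))) ({{v, a}, {a, b}, {b, c}, {c, v}} \<union> E)"
proof -
  have fin: "finite V" and sg: "sg V E" and cn: "conn V E" and ca: "cact E" and bi: "bip E"
    using bc unfolding bc_def by auto
  have dv: "v \<noteq> a" "v \<noteq> b" "v \<noteq> c" using v new by auto
  let ?C = "{{v, a}, {a, b}, {b, c}, {c, v}}"
  let ?E = "?C \<union> E"
  let ?V = "insert c (insert b (insert a V))"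
  have sg': "sg ?V ?E" using sg d dv v unfolding sg_def by blast
  have "conn ?V (insert {b, c} (insert {a, b} (insert {v, a} E)))"
    using conn_add[OF conn_add[OF conn_add[OF cn v]]] v by simp
  then have cn': "conn ?V ?E" by (rule conn_mono) auto
  have Ea: "\<And>e. e \<in> E \<Longrightarrow> a \<notin> e" and Eb: "\<And>e. e \<in> E \<Longrightarrow> b \<notin> e" and Ec: "\<And>e. e \<in> E \<Longrightarrow> c \<notin> e"
    using edges_avoid[OF sg] new by auto
  have Na: "\<And>q. {a, q} \<in> ?E \<Longrightarrow> q = v \<or> q = b"
    using Ea d dv by (auto simp: doubleton_eq_iff)
  have Nb: "\<And>q. {b, q} \<in> ?E \<Longrightarrow> q = a \<or> q = c"
    using Eb d dv by (auto simp: doubleton_eq_iff)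
  have Nc: "\<And>q. {c, q} \<in> ?E \<Longrightarrow> q = b \<or> q = v"
    using Ec d dv by (auto simp: doubleton_eq_iff)
  have E'sub: "\<And>e. e \<in> ?E \<Longrightarrow> e \<subseteq> {v, a, b, c} \<Longrightarrow> e \<in> ?C"
  proof -
    fix e assume e: "e \<in> ?E" "e \<subseteq> {v, a, b, c}"
    show "e \<in> ?C"
    proof (rule ccontr)
      assume "e \<notin> ?C"
      then have eE: "e \<in> E" using e by simp
      then obtain p q where pq: "e = {p, q}" "p \<noteq> q" "p \<in> V" "q \<in> V" using sg unfolding sg_def by meson
      then have "p = v" "q = v" using e new by auto
      then show False using pq by simp
    qed
  qed
  have cases_cyc: "\<And>vs. cyc ?E vs \<Longrightarrow> cyc E vs \<or> cedges vs = ?C"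
  proof -
    fix vs assume cv: "cyc ?E vs"
    show "cyc E vs \<or> cedges vs = ?C"
    proof (cases "a \<in> set vs \<or> b \<in> set vs \<or> c \<in> set vs")
      case True
      then show ?thesis using c4_cycle[OF cv Na Nb Nc d(3) E'sub] by blast
    next
      case False
      have "cedges vs \<subseteq> E"
      proof
        fix e assume e: "e \<in> cedges vs"
        then have "e \<subseteq> set vs" using cedges_sub by blast
        then have "a \<notin> e" "b \<notin> e" "c \<notin> e" using False by auto
        moreover have "e \<in> ?E" using e cv unfolding cyc_def by auto
        ultimately show "e \<in> E" by auto
      qed
      then show ?thesis using cv unfolding cyc_def by simp
    qed
  qed
  have CE_dis: "\<And>e. e \<in> ?C \<Longrightarrow> e \<notin> E" using Ea Eb Ec by auto
  have ca': "cact ?E"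
    unfolding cact_def
  proof (intro ballI allI impI)
    fix e vs1 vs2 assume a: "e \<in> ?E" "cyc ?E vs1 \<and> cyc ?E vs2 \<and> e \<in> cedges vs1 \<and> e \<in> cedges vs2"
    have c1: "cyc E vs1 \<or> cedges vs1 = ?C" and c2: "cyc E vs2 \<or> cedges vs2 = ?C" using cases_cyc a by auto
    show "cedges vs1 = cedges vs2"
    proof (cases "cedges vs1 = ?C")
      case True
      then have "e \<notin> E" using a CE_dis by auto
      then have "\<not> cyc E vs2" using a unfolding cyc_def by auto
      then show ?thesis using c2 True by simp
    next
      case False
      then have c1': "cyc E vs1" using c1 by simp
      then have eE: "e \<in> E" using a unfolding cyc_def by auto
      then have "cedges vs2 \<noteq> ?C" using a CE_dis by auto
      then have "cyc E vs2" using c2 by simp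
      then show ?thesis using ca c1' eE a unfolding cact_def by blast
    qed
  qed
  obtain A where A: "\<forall>e\<in>E. card (e \<inter> A) = 1" using bi unfolding bip_def by blast
  define A' where "A' = (A \<inter> V) \<union> (if v \<in> A then {b} else {a, c})"
  have "\<forall>e\<in>?E. card (e \<inter> A') = 1"
  proof
    fix e assume e: "e \<in> ?E"
    show "card (e \<inter> A') = 1"
    proof (cases "e \<in> ?C")
      case True
      show ?thesis
      proof (cases "v \<in> A")
        case vA: True
        have "{v, a} \<inter> A' = {v}" "{a, b} \<inter> A' = {b}" "{b, c} \<inter> A' = {b}" "{c, v} \<inter> A' = {v}"
          unfolding A'_def using vA v new d dv by auto
        then show ?thesis using True by auto
      next
        case vA: False
        have "{v, a} \<inter> A' = {a}" "{a, b} \<inter> A' = {a}" "{b, c} \<inter> A' = {c}" "{c, v} \<inter> A' = {c}"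
          unfolding A'_def using vA v new d dv by auto
        then show ?thesis using True by auto
      qed
    next
      case False
      then have eE: "e \<in> E" using e by simp
      then have "e \<subseteq> V" using sg_sub[OF sg] by blast
      then have "e \<inter> A' = e \<inter> A" unfolding A'_def using new by auto
      then show ?thesis using A eE by simp
    qed
  qed
  then have "bip ?E" unfolding bip_def by blast
  then show ?thesis unfolding bc_def using fin sg' cn' ca' by simp
qed

definition realizable :: "nat multiset \<Rightarrow> bool" where
  "realizable D \<longleftrightarrow> (\<exists>V E. bc V E \<and> image_mset (gdeg E) (mset_set V) = D)"

lemma mset_change:
  assumes "finite V" "v \<in> V" "\<forall>x\<in>V-{v}. f x = g x"
  shows "image_mset f (mset_set V) = add_mset (f v) (image_mset g (mset_set V) - {#g v#})"
proof -
  have V: "mset_set V = add_mset v (mset_set (V - {v}))" using assms by (simp add: mset_set.remove)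
  have "image_mset f (mset_set (V - {v})) = image_mset g (mset_set (V - {v}))"
    using assms by (intro image_mset_cong) auto
  then show ?thesis using V by simp
qed

lemma real_single: "realizable {#0#}"
proof -
  have "gdeg {} 0 = 0" unfolding gdeg_def by simp
  then show ?thesis unfolding realizable_def using bc_single[of 0] by (intro exI[of _ "{0}"] exI[of _ "{}"]) simp
qed

lemma fresh: "finite (V :: nat set) \<Longrightarrow> \<exists>w. w \<notin> V"
  using ex_new_if_finite infinite_UNIV_nat by blast

lemma real_leaf:
  assumes r: "realizable D" and y: "y \<in># D"
  shows "realizable (add_mset 1 (add_mset (y + 1) (D - {#y#})))"
proof -
  obtain V E where VE: "bc V E" "image_mset (gdeg E) (mset_set V) = D" using r unfolding realizable_def by blast
  have fin: "finite V" and sg: "sg V E" using VE unfolding bc_def by auto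
  have finE: "finite E" using sg_finite[OF fin sg] .
  obtain v where v: "v \<in> V" "gdeg E v = y" using y VE fin by auto
  obtain w where w: "w \<notin> V" using fresh[OF fin] by blast
  let ?E = "insert {v, w} E"
  have bc': "bc (insert w V) ?E" using bc_leaf[OF VE(1) v(1) w] .
  have wE: "\<And>e. e \<in> E \<Longrightarrow> w \<notin> e" using edges_avoid[OF sg w] by blast
  have vw: "v \<noteq> w" using v w by auto
  have dw: "gdeg ?E w = 1"
  proof -
    have "{e\<in>?E. w \<in> e} = {{v, w}}" using wE by auto
    then show ?thesis unfolding gdeg_def by simp
  qed
  have dv: "gdeg ?E v = y + 1"
  proof -
    have "{e\<in>?E. v \<in> e} = insert {v, w} {e\<in>E. v \<in> e}" by auto
    moreover have "{v, w} \<notin> E" using wE by auto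
    moreover have "finite {e\<in>E. v \<in> e}" using finE by simp
    ultimately have "gdeg ?E v = Suc (gdeg E v)" unfolding gdeg_def by simp
    then show ?thesis using v by simp
  qed
  have dx: "\<forall>x\<in>V-{v}. gdeg ?E x = gdeg E x"
  proof
    fix x assume x: "x \<in> V - {v}"
    then have "x \<noteq> w" using w by auto
    then have "{e\<in>?E. x \<in> e} = {e\<in>E. x \<in> e}" using x by auto
    then show "gdeg ?E x = gdeg E x" unfolding gdeg_def by simp
  qed
  have "image_mset (gdeg ?E) (mset_set (insert w V)) = add_mset (gdeg ?E w) (image_mset (gdeg ?E) (mset_set V))"
    using fin w by simp
  also have "image_mset (gdeg ?E) (mset_set V) = add_mset (y + 1) (D - {#y#})"
    using mset_change[OF fin v(1) dx] dv v VE by simp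
  finally have "image_mset (gdeg ?E) (mset_set (insert w V)) = add_mset 1 (add_mset (y + 1) (D - {#y#}))"
    using dw by simp
  then show ?thesis unfolding realizable_def using bc' by blast
qed

lemma real_c4:
  assumes r: "realizable D" and y: "y \<in># D"
  shows "realizable (add_mset 2 (add_mset 2 (add_mset 2 (add_mset (y + 2) (D - {#y#})))))"
proof -
  obtain V E where VE: "bc V E" "image_mset (gdeg E) (mset_set V) = D" using r unfolding realizable_def by blast
  have fin: "finite V" and sg: "sg V E" using VE unfolding bc_def by auto
  have finE: "finite E" using sg_finite[OF fin sg] .
  obtain v where v: "v \<in> V" "gdeg E v = y" using y VE fin by auto
  obtain a where a: "a \<notin> V" using fresh[OF fin] by blast
  obtain b where b: "b \<notin> insert a V" using fresh[of "insert a V"] fin by blast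
  obtain c where c: "c \<notin> insert b (insert a V)" using fresh[of "insert b (insert a V)"] fin by blast
  have new: "a \<notin> V" "b \<notin> V" "c \<notin> V" and d: "a \<noteq> b" "b \<noteq> c" "a \<noteq> c" using a b c by auto
  have dv': "v \<noteq> a" "v \<noteq> b" "v \<noteq> c" using v new by auto
  let ?C = "{{v, a}, {a, b}, {b, c}, {c, v}}"
  let ?E = "?C \<union> E"
  let ?V = "insert c (insert b (insert a V))"
  have bc': "bc ?V ?E" using bc_c4[OF VE(1) v(1) new d] .
  have Ea: "\<And>e. e \<in> E \<Longrightarrow> a \<notin> e" and Eb: "\<And>e. e \<in> E \<Longrightarrow> b \<notin> e" and Ec: "\<And>e. e \<in> E \<Longrightarrow> c \<notin> e"
    using edges_avoid[OF sg] new by auto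
  have da: "gdeg ?E a = 2"
  proof -
    have "{e\<in>?E. a \<in> e} = {{v, a}, {a, b}}" using Ea d dv' by auto
    moreover have "{v, a} \<noteq> {a, b}" using d dv' by (auto simp: doubleton_eq_iff)
    ultimately show ?thesis unfolding gdeg_def by simp
  qed
  have db: "gdeg ?E b = 2"
  proof -
    have "{e\<in>?E. b \<in> e} = {{a, b}, {b, c}}" using Eb d dv' by auto
    moreover have "{a, b} \<noteq> {b, c}" using d dv' by (auto simp: doubleton_eq_iff)
    ultimately show ?thesis unfolding gdeg_def by simp
  qed
  have dc: "gdeg ?E c = 2"
  proof -
    have "{e\<in>?E. c \<in> e} = {{b, c}, {c, v}}" using Ec d dv' by auto
    moreover have "{b, c} \<noteq> {c, v}" using d dv' by (auto simp: doubleton_eq_iff)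
    ultimately show ?thesis unfolding gdeg_def by simp
  qed
  have dv: "gdeg ?E v = y + 2"
  proof -
    have S: "{e\<in>?E. v \<in> e} = insert {v, a} (insert {c, v} {e\<in>E. v \<in> e})" using dv' by auto
    have n1: "{c, v} \<notin> {e\<in>E. v \<in> e}" using Ec by auto
    have n2: "{v, a} \<notin> insert {c, v} {e\<in>E. v \<in> e}" using Ea d dv' by (auto simp: doubleton_eq_iff)
    have "finite {e\<in>E. v \<in> e}" using finE by simp
    then have "gdeg ?E v = Suc (Suc (gdeg E v))" unfolding gdeg_def S using n1 n2 by simp
    then show ?thesis using v by simp
  qed
  have dx: "\<forall>x\<in>V-{v}. gdeg ?E x = gdeg E x"
  proof
    fix x assume x: "x \<in> V - {v}"
    then have "x \<noteq> a" "x \<noteq> b" "x \<noteq> c" using new by auto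
    then have "{e\<in>?E. x \<in> e} = {e\<in>E. x \<in> e}" using x by auto
    then show "gdeg ?E x = gdeg E x" unfolding gdeg_def by simp
  qed
  have "image_mset (gdeg ?E) (mset_set ?V) =
      add_mset (gdeg ?E c) (add_mset (gdeg ?E b) (add_mset (gdeg ?E a) (image_mset (gdeg ?E) (mset_set V))))"
    using fin new d by simp
  also have "image_mset (gdeg ?E) (mset_set V) = add_mset (y + 2) (D - {#y#})"
    using mset_change[OF fin v(1) dx] dv v VE by simp
  finally have "image_mset (gdeg ?E) (mset_set ?V) = add_mset 2 (add_mset 2 (add_mset 2 (add_mset (y + 2) (D - {#y#}))))"
    using da db dc by simp
  then show ?thesis unfolding realizable_def using bc' by blast
qed

definition good :: "nat multiset \<Rightarrow> bool" where
  "good D \<longleftrightarrow> (\<forall>x\<in>#D. 1 \<le> x) \<and> even (sum_mset D) \<and> 2 * size D \<le> sum_mset D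
     \<and> 3 * sum_mset D + 2 * count D 1 + 8 \<le> 8 * size D
     \<and> 3 * sum_mset D + size (filter_mset odd D) + 8 \<le> 8 * size D
     \<and> 2 \<le> size (filter_mset odd D)"

definition tree_ok :: "nat multiset \<Rightarrow> bool" where
  "tree_ok D \<longleftrightarrow> (\<forall>x\<in>#D. 1 \<le> x) \<and> 2 \<le> size D \<and> sum_mset D + 2 = 2 * size D"

lemma sum_lower: "\<forall>x\<in>#M. k \<le> x \<Longrightarrow> k * size M \<le> sum_mset M"
  by (induction M) auto

lemma sum_upper: "\<forall>x\<in>#M. x \<le> k \<Longrightarrow> sum_mset M \<le> k * size M"
  by (induction M) auto

lemma split2: "1 \<in># D \<Longrightarrow> x \<in># D \<Longrightarrow> x \<noteq> 1 \<Longrightarrow> \<exists>D0. D = add_mset 1 (add_mset x D0)"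
proof -
  assume a: "1 \<in># D" "x \<in># D" "x \<noteq> 1"
  obtain M where M: "D = add_mset 1 M" using a(1) by (metis multi_member_split)
  then have "x \<in># M" using a by auto
  then obtain D0 where "M = add_mset x D0" by (metis multi_member_split)
  then show ?thesis using M by blast
qed


lemma decomp1:
  "\<forall>x\<in>#(D::nat multiset). 1 \<le> x \<Longrightarrow> size D = count D 1 + count D 2 + size (filter_mset (\<lambda>x. 3 \<le> x) D)"
proof (induction D)
  case (add x D)
  then have IH: "size D = count D 1 + count D 2 + size (filter_mset (\<lambda>x. 3 \<le> x) D)" by simp
  have "x = 1 \<or> x = 2 \<or> 3 \<le> x" using add.prems by fastforce
  then show ?case using IH by (elim disjE) simp_all
qed simp

lemma decomp2:
  "\<forall>x\<in>#(D::nat multiset). 1 \<le> x \<Longrightarrow> sum_mset D = count D 1 + 2 * count D 2 + sum_mset (filter_mset (\<lambda>x. 3 \<le> x) D)"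
proof (induction D)
  case (add x D)
  then have IH: "sum_mset D = count D 1 + 2 * count D 2 + sum_mset (filter_mset (\<lambda>x. 3 \<le> x) D)" by simp
  have "x = 1 \<or> x = 2 \<or> 3 \<le> x" using add.prems by fastforce
  then show ?case using IH by (elim disjE) simp_all
qed simp

lemma decomp3:
  "\<forall>x\<in>#(D::nat multiset). 1 \<le> x \<Longrightarrow> size (filter_mset odd D) = count D 1 + size (filter_mset odd (filter_mset (\<lambda>x. 3 \<le> x) D))"
proof (induction D)
  case (add x D)
  then have IH: "size (filter_mset odd D) = count D 1 + size (filter_mset odd (filter_mset (\<lambda>x. 3 \<le> x) D))" by simp
  have "x = 1 \<or> x = 2 \<or> 3 \<le> x" using add.prems by fastforce
  then show ?case using IH by (elim disjE) simp_all
qed simp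

lemma split4: "x \<in># (D::nat multiset) \<Longrightarrow> 3 \<le> count D 2 \<Longrightarrow> x \<noteq> 2 \<Longrightarrow> \<exists>D0. D = add_mset 2 (add_mset 2 (add_mset 2 (add_mset x D0)))"
proof -
  assume a: "x \<in># D" "3 \<le> count D 2" "x \<noteq> 2"
  obtain M1 where M1: "D = add_mset x M1" using a(1) by (metis multi_member_split)
  then have c1: "3 \<le> count M1 2" using a by auto
  then obtain M2 where M2: "M1 = add_mset 2 M2" by (metis multi_member_split count_greater_zero_iff
      less_le_trans numeral_3_eq_3 zero_less_Suc)
  then have c2: "2 \<le> count M2 2" using c1 by auto
  then obtain M3 where M3: "M2 = add_mset 2 M3" by (metis multi_member_split count_greater_zero_iff
      less_le_trans pos2)
  then have c3: "1 \<le> count M3 2" using c2 by auto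
  then obtain D0 where D0: "M3 = add_mset 2 D0" by (metis multi_member_split count_greater_zero_iff
      less_le_trans zero_less_one)
  show ?thesis using M1 M2 M3 D0 by (auto simp: add_mset_commute)
qed

lemma parity_odd: "even (sum_mset (D::nat multiset)) \<longleftrightarrow> even (size (filter_mset odd D))"
  by (induction D) auto

lemma leaf_shape: "2 \<le> (x::nat) \<Longrightarrow> add_mset 1 (add_mset (x - 1 + 1) (add_mset (x - 1) D0 - {#x - 1#})) = add_mset 1 (add_mset x D0)"
  by simp

lemma c4_shape: "3 \<le> (x::nat) \<Longrightarrow> add_mset 2 (add_mset 2 (add_mset 2 (add_mset (x - 2 + 2) (add_mset (x - 2) D0 - {#x - 2#}))))
    = add_mset 2 (add_mset 2 (add_mset 2 (add_mset x D0)))"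
  by simp

definition RED :: "nat multiset \<Rightarrow> bool" where
  "RED D \<longleftrightarrow> (\<exists>D' y. size D' < size D \<and> (good D' \<or> tree_ok D') \<and> y \<in># D' \<and>
     (D = add_mset 1 (add_mset (y + 1) (D' - {#y#})) \<or> D = add_mset 2 (add_mset 2 (add_mset 2 (add_mset (y + 2) (D' - {#y#}))))))"

lemma RED_leaf:
  assumes "D = add_mset 1 (add_mset x D0)" "2 \<le> x" "good (add_mset (x - 1) D0) \<or> tree_ok (add_mset (x - 1) D0)"
  shows "RED D"
  unfolding RED_def
  by (rule exI[of _ "add_mset (x - 1) D0"], rule exI[of _ "x - 1"]) (use assms leaf_shape in auto)

lemma RED_c4:
  assumes "D = add_mset 2 (add_mset 2 (add_mset 2 (add_mset x D0)))" "3 \<le> x" "good (add_mset (x - 2) D0) \<or> tree_ok (add_mset (x - 2) D0)"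
  shows "RED D"
  unfolding RED_def
  by (rule exI[of _ "add_mset (x - 2) D0"], rule exI[of _ "x - 2"]) (use assms c4_shape in auto)

lemma even_cases: "even (S::nat) \<Longrightarrow> 2 * n \<le> S \<Longrightarrow> S = 2 * n \<or> 2 * n + 2 \<le> S"
  by presburger

lemma caseA:
  assumes g: "good D" and t: "3 \<le> count D 2" and x: "x \<in># D" "4 \<le> x"
  shows "RED D"
proof -
  obtain D0 where D: "D = add_mset 2 (add_mset 2 (add_mset 2 (add_mset x D0)))" using split4[OF x(1) t] x by auto
  let ?D' = "add_mset (x - 2) D0"
  have px: "odd (x - 2) = odd x" using x by presburger
  have sD: "size D = size D0 + 4" "sum_mset D = sum_mset D0 + x + 6" "count D 1 = count D0 1"
    "size (filter_mset odd D) = size (filter_mset odd D0) + (if odd x then 1 else 0)" using D x by auto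
  have sD': "size ?D' = size D0 + 1" "sum_mset ?D' = sum_mset D0 + x - 2" "count ?D' 1 = count D0 1"
    "size (filter_mset odd ?D') = size (filter_mset odd D0) + (if odd x then 1 else 0)" using x px by auto
  have pos: "\<forall>y\<in>#?D'. 1 \<le> y" using g x unfolding good_def D by auto
  have gD: "even (sum_mset D)" "2 * size D \<le> sum_mset D" "3 * sum_mset D + 2 * count D 1 + 8 \<le> 8 * size D"
    "3 * sum_mset D + size (filter_mset odd D) + 8 \<le> 8 * size D" "2 \<le> size (filter_mset odd D)"
    using g unfolding good_def by auto
  have ev': "even (sum_mset ?D')"
  proof -
    have "sum_mset D = sum_mset ?D' + 8" using sD sD' x by simp
    then show ?thesis using gD(1) by simp
  qed
  consider "sum_mset D = 2 * size D" | "2 * size D + 2 \<le> sum_mset D" using even_cases[OF gD(1,2)] by blast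
  then have "good ?D' \<or> tree_ok ?D'"
  proof cases
    case 1
    have "tree_ok ?D'" unfolding tree_ok_def using pos sD sD' 1 x by auto
    then show ?thesis by simp
  next
    case 2
    have "good ?D'" unfolding good_def using pos ev' sD sD' 2 gD x by auto
    then show ?thesis by simp
  qed
  then show ?thesis using RED_c4[OF D] x by simp
qed

lemma good_decomp:
  assumes g: "good D"
  shows "size D = count D 1 + count D 2 + size (filter_mset (\<lambda>x. 3 \<le> x) D)"
    "sum_mset D = count D 1 + 2 * count D 2 + sum_mset (filter_mset (\<lambda>x. 3 \<le> x) D)"
    "size (filter_mset odd D) = count D 1 + size (filter_mset odd (filter_mset (\<lambda>x. 3 \<le> x) D))"
    "3 * size (filter_mset (\<lambda>x. 3 \<le> x) D) \<le> sum_mset (filter_mset (\<lambda>x. 3 \<le> x) D)"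
    "size (filter_mset odd (filter_mset (\<lambda>x. 3 \<le> x) D)) \<le> size (filter_mset (\<lambda>x. 3 \<le> x) D)"
proof -
  have pos: "\<forall>x\<in>#D. 1 \<le> x" using g unfolding good_def by simp
  show "size D = count D 1 + count D 2 + size (filter_mset (\<lambda>x. 3 \<le> x) D)" using decomp1[OF pos] .
  show "sum_mset D = count D 1 + 2 * count D 2 + sum_mset (filter_mset (\<lambda>x. 3 \<le> x) D)" using decomp2[OF pos] .
  show "size (filter_mset odd D) = count D 1 + size (filter_mset odd (filter_mset (\<lambda>x. 3 \<le> x) D))" using decomp3[OF pos] .
  show "3 * size (filter_mset (\<lambda>x. 3 \<le> x) D) \<le> sum_mset (filter_mset (\<lambda>x. 3 \<le> x) D)"
    by (rule sum_lower) auto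
  show "size (filter_mset odd (filter_mset (\<lambda>x. 3 \<le> x) D)) \<le> size (filter_mset (\<lambda>x. 3 \<le> x) D)"
    by (rule size_filter_mset_lesseq)
qed

lemma caseB:
  assumes g: "good D" and t: "3 \<le> count D 2" and le3: "\<forall>y\<in>#D. y \<le> 3"
  shows "RED D"
proof -
  define D3 where "D3 = filter_mset (\<lambda>x. 3 \<le> x) D"
  note dc = good_decomp[OF g, folded D3_def]
  have all3: "\<forall>y\<in>#D3. y = 3" using le3 unfolding D3_def by fastforce
  have s3: "sum_mset D3 = 3 * size D3" using sum_upper[of D3 3] dc(4) all3 by simp
  have "filter_mset odd D3 = filter_mset (\<lambda>_. True) D3" using all3 by (intro filter_mset_cong0) auto
  then have o3: "size (filter_mset odd D3) = size D3" by simp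
  have gD: "\<forall>x\<in>#D. 1 \<le> x" "even (sum_mset D)" "2 * size D \<le> sum_mset D" "3 * sum_mset D + 2 * count D 1 + 8 \<le> 8 * size D"
    "3 * sum_mset D + size (filter_mset odd D) + 8 \<le> 8 * size D" "2 \<le> size (filter_mset odd D)"
    using g unfolding good_def by auto
  have h1: "size D3 \<ge> 1" using dc s3 o3 gD by linarith
  then have "D3 \<noteq> {#}" by auto
  then obtain z where "z \<in># D3" by (rule multiset_nonemptyE)
  then have three: "3 \<in># D" using all3 unfolding D3_def by auto
  show ?thesis
  proof (cases "sum_mset D = 2 * size D \<or> 3 * sum_mset D + 2 * count D 1 + 10 \<le> 8 * size D")
    case True
    note T = True
    obtain D0 where D: "D = add_mset 2 (add_mset 2 (add_mset 2 (add_mset 3 D0)))" using split4[OF three t] by auto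
    let ?D' = "add_mset 1 D0"
    have sD: "size D = size D0 + 4" "sum_mset D = sum_mset D0 + 9" "count D 1 = count D0 1"
      "size (filter_mset odd D) = size (filter_mset odd D0) + 1" using D by auto
    have sD': "size ?D' = size D0 + 1" "sum_mset ?D' = sum_mset D0 + 1" "count ?D' 1 = count D0 1 + 1"
      "size (filter_mset odd ?D') = size (filter_mset odd D0) + 1" by auto
    have pos: "\<forall>y\<in>#?D'. 1 \<le> y" using gD unfolding D by auto
    have ev': "even (sum_mset ?D')" using gD(2) sD sD' by simp
    have "good ?D' \<or> tree_ok ?D'"
    proof (cases "sum_mset D = 2 * size D")
      case True
      have "tree_ok ?D'" unfolding tree_ok_def using pos sD sD' True by auto
      then show ?thesis by simp
    next
      case False
      then have "3 * sum_mset D + 2 * count D 1 + 10 \<le> 8 * size D" using T by blast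
      moreover have "2 * size D + 2 \<le> sum_mset D" using even_cases[OF gD(2,3)] False by blast
      ultimately have "good ?D'" unfolding good_def using pos ev' sD sD' gD by auto
      then show ?thesis by simp
    qed
    then show ?thesis using RED_c4[OF D] by simp
  next
    case False
    then have c2: "2 * size D + 2 \<le> sum_mset D" "8 * size D < 3 * sum_mset D + 2 * count D 1 + 10"
      using even_cases[OF gD(2,3)] by auto
    have m1: "count D 1 \<ge> 1" using dc s3 o3 gD c2 by linarith
    have o4: "size (filter_mset odd D) \<ge> 4" using dc s3 o3 gD c2 m1 by linarith
    have one: "1 \<in># D" using m1 by (simp add: Suc_le_eq)
    obtain D0 where D: "D = add_mset 1 (add_mset 3 D0)" using split2[OF one three] by auto
    let ?D' = "add_mset 2 D0"
    have sD: "size D = size D0 + 2" "sum_mset D = sum_mset D0 + 4" "count D 1 = count D0 1 + 1"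
      "size (filter_mset odd D) = size (filter_mset odd D0) + 2" using D by auto
    have sD': "size ?D' = size D0 + 1" "sum_mset ?D' = sum_mset D0 + 2" "count ?D' 1 = count D0 1"
      "size (filter_mset odd ?D') = size (filter_mset odd D0)" by auto
    have pos: "\<forall>y\<in>#?D'. 1 \<le> y" using gD unfolding D by auto
    have ev': "even (sum_mset ?D')" using gD(2) sD sD' by simp
    have "good ?D'" unfolding good_def using pos ev' sD sD' gD c2 o4 by auto
    then show ?thesis using RED_leaf[OF D] by simp
  qed
qed

lemma caseC:
  assumes g: "good D" and t: "count D 2 \<le> 2"
  shows "RED D"
proof -
  define D3 where "D3 = filter_mset (\<lambda>x. 3 \<le> x) D"
  note dc = good_decomp[OF g, folded D3_def]
  have gD: "\<forall>x\<in>#D. 1 \<le> x" "even (sum_mset D)" "2 * size D \<le> sum_mset D" "3 * sum_mset D + 2 * count D 1 + 8 \<le> 8 * size D"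
    "3 * sum_mset D + size (filter_mset odd D) + 8 \<le> 8 * size D" "2 \<le> size (filter_mset odd D)"
    using g unfolding good_def by auto
  have m1: "count D 1 \<ge> 2" using dc gD t by linarith
  have "0 < count D 1" using m1 by linarith
  then have one: "1 \<in># D" using count_greater_zero_iff by metis
  show ?thesis
  proof (cases "\<exists>x\<in>#D. 3 \<le> x \<and> odd x")
    case True
    then obtain x where x: "x \<in># D" "3 \<le> x" "odd x" by blast
    have "x \<in># filter_mset odd D3" using x unfolding D3_def by simp
    then have "filter_mset odd D3 \<noteq> {#}" by auto
    then have "size (filter_mset odd D3) \<noteq> 0" by simp
    then have "size (filter_mset odd D3) \<ge> 1" by linarith
    then have o3: "size (filter_mset odd D) \<ge> 3" using dc m1 by linarith
    have "even (size (filter_mset odd D))" using parity_odd gD(2) by blast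
    then have o4: "size (filter_mset odd D) \<ge> 4" using o3 by presburger
    obtain D0 where D: "D = add_mset 1 (add_mset x D0)" using split2[OF one x(1)] x by auto
    let ?D' = "add_mset (x - 1) D0"
    have px: "even (x - 1)" using x by presburger
    have sD: "size D = size D0 + 2" "sum_mset D = sum_mset D0 + x + 1" "count D 1 = count D0 1 + 1"
      "size (filter_mset odd D) = size (filter_mset odd D0) + 2" using D x by auto
    have sD': "size ?D' = size D0 + 1" "sum_mset ?D' = sum_mset D0 + x - 1" "count ?D' 1 = count D0 1"
      "size (filter_mset odd ?D') = size (filter_mset odd D0)" using x px by auto
    have pos: "\<forall>y\<in>#?D'. 1 \<le> y" using gD x unfolding D by auto
    have ev': "even (sum_mset ?D')"
    proof -
      have "sum_mset D = sum_mset ?D' + 2" using sD sD' x by simp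
      then show ?thesis using gD(2) by simp
    qed
    have "good ?D'" unfolding good_def using pos ev' sD sD' gD o4 x by auto
    then show ?thesis using RED_leaf[OF D] x by simp
  next
    case False
    then have nodd: "\<forall>x\<in>#D3. even x" unfolding D3_def by auto
    then have "filter_mset odd D3 = {#}" by simp
    then have o3: "size (filter_mset odd D3) = 0" by simp
    have "D3 \<noteq> {#}"
    proof
      assume "D3 = {#}"
      then show False using dc m1 gD by simp
    qed
    then obtain x where xD3: "x \<in># D3" by (rule multiset_nonemptyE)
    then have x: "x \<in># D" "3 \<le> x" "even x" using nodd unfolding D3_def by auto
    then have x4: "4 \<le> x" by presburger
    obtain D0 where D: "D = add_mset 1 (add_mset x D0)" using split2[OF one x(1)] x by auto
    let ?D' = "add_mset (x - 1) D0"
    have px: "odd (x - 1)" using x4 x by presburger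
    have sD: "size D = size D0 + 2" "sum_mset D = sum_mset D0 + x + 1" "count D 1 = count D0 1 + 1"
      "size (filter_mset odd D) = size (filter_mset odd D0) + 1" using D x by auto
    have sD': "size ?D' = size D0 + 1" "sum_mset ?D' = sum_mset D0 + x - 1" "count ?D' 1 = count D0 1"
      "size (filter_mset odd ?D') = size (filter_mset odd D0) + 1" using x4 px by auto
    have pos: "\<forall>y\<in>#?D'. 1 \<le> y" using gD x unfolding D by auto
    have ev': "even (sum_mset ?D')"
    proof -
      have "sum_mset D = sum_mset ?D' + 2" using sD sD' x by simp
      then show ?thesis using gD(2) by simp
    qed
    have oo: "size (filter_mset odd D) = count D 1" using dc o3 by simp
    have "good ?D'" unfolding good_def using pos ev' sD sD' gD x4 oo m1 by auto
    then show ?thesis using RED_leaf[OF D] x4 by simp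
  qed
qed

lemma good_RED: "good D \<Longrightarrow> RED D"
proof -
  assume g: "good D"
  show "RED D"
  proof (cases "count D 2 \<le> 2")
    case True then show ?thesis using caseC g by blast
  next
    case False
    then have t: "3 \<le> count D 2" by simp
    show ?thesis
    proof (cases "\<exists>x\<in>#D. 4 \<le> x")
      case True
      then obtain x where "x \<in># D" "4 \<le> x" by blast
      then show ?thesis using caseA[OF g t] by blast
    next
      case False
      then have "\<forall>y\<in>#D. y \<le> 3" by auto
      then show ?thesis using caseB[OF g t] by blast
    qed
  qed
qed

lemma tree_real: "tree_ok D \<Longrightarrow> realizable D"
proof (induction "size D" arbitrary: D rule: less_induct)
  case less
  have pos: "\<forall>x\<in>#D. 1 \<le> x" and n2: "2 \<le> size D" and sm: "sum_mset D + 2 = 2 * size D"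
    using less.prems unfolding tree_ok_def by auto
  have one: "1 \<in># D"
  proof (rule ccontr)
    assume "1 \<notin># D"
    then have "\<forall>x\<in>#D. 2 \<le> x" using pos by (metis One_nat_def Suc_1 Suc_le_eq le_neq_implies_less)
    then have "2 * size D \<le> sum_mset D" by (rule sum_lower)
    then show False using sm by simp
  qed
  show ?case
  proof (cases "size D = 2")
    case True
    obtain M where M: "D = add_mset 1 M" using one by (metis multi_member_split)
    then have "size M = 1" using True by simp
    then obtain x where x: "M = {#x#}" using size_1_singleton_mset by blast
    then have "x = 1" using sm M True by simp
    then have "D = add_mset 1 (add_mset (0 + 1) ({#0#} - {#0#}))" using M x by simp
    then show ?thesis using real_leaf[OF real_single, of 0] by simp
  next
    case False
    then have n3: "3 \<le> size D" using n2 by simp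
    have "\<exists>x\<in>#D. 2 \<le> x"
    proof (rule ccontr)
      assume "\<not> (\<exists>x\<in>#D. 2 \<le> x)"
      then have "\<forall>x\<in>#D. x \<le> 1" by auto
      then have "sum_mset D \<le> 1 * size D" by (rule sum_upper)
      then show False using sm n3 by simp
    qed
    then obtain x where x: "x \<in># D" "2 \<le> x" by blast
    obtain D0 where D: "D = add_mset 1 (add_mset x D0)" using split2[OF one x(1)] x by auto
    let ?D' = "add_mset (x - 1) D0"
    have "tree_ok ?D'" unfolding tree_ok_def using pos sm n3 x D by auto
    moreover have "size ?D' < size D" using D by simp
    ultimately have "realizable ?D'" using less by blast
    then have "realizable (add_mset 1 (add_mset (x - 1 + 1) (?D' - {#x - 1#})))" by (rule real_leaf) simp
    then show ?thesis using D x by simp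
  qed
qed

lemma good_real: "good D \<or> tree_ok D \<Longrightarrow> realizable D"
proof (induction "size D" arbitrary: D rule: less_induct)
  case less
  show ?case
  proof (cases "tree_ok D")
    case True then show ?thesis using tree_real by blast
  next
    case False
    then have "good D" using less.prems by blast
    then have "RED D" using good_RED by blast
    then obtain D' y where D': "size D' < size D" "good D' \<or> tree_ok D'" "y \<in># D'"
      "D = add_mset 1 (add_mset (y + 1) (D' - {#y#})) \<or> D = add_mset 2 (add_mset 2 (add_mset 2 (add_mset (y + 2) (D' - {#y#}))))"
      unfolding RED_def by blast
    have "realizable D'" using less D' by blast
    then show ?thesis using D'(3,4) real_leaf real_c4 by metis
  qed
qed

lemma mset_bij:
  assumes "finite A" "finite B" "image_mset g (mset_set A) = image_mset h (mset_set B)"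
  shows "\<exists>f. bij_betw f A B \<and> (\<forall>x\<in>A. h (f x) = g x)"
  using assms
proof (induction A arbitrary: B rule: finite_induct)
  case empty
  then have "B = {}" by (metis image_mset_is_empty_iff mset_set_empty_iff)
  then show ?case by (simp add: bij_betw_def)
next
  case (insert a A)
  have "g a \<in># image_mset h (mset_set B)"
    using insert.prems(2) insert.hyps by (metis image_mset_add_mset mset_set.insert union_single_eq_member)
  then obtain b where b: "b \<in> B" "h b = g a" using insert.prems(1) by auto
  have "image_mset h (mset_set B) = add_mset (h b) (image_mset h (mset_set (B - {b})))"
    using b insert.prems(1) by (simp add: mset_set.remove)
  then have "image_mset g (mset_set A) = image_mset h (mset_set (B - {b}))"
    using insert.prems(2) insert.hyps b by simp
  then obtain f0 where f0: "bij_betw f0 A (B - {b})" "\<forall>x\<in>A. h (f0 x) = g x"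
    using insert.IH[of "B - {b}"] insert.prems(1) by blast
  define f where "f x = (if x = a then b else f0 x)" for x
  have "bij_betw f (insert a A) B"
    unfolding bij_betw_def
  proof
    have "inj_on f0 A" "f0 ` A = B - {b}" using f0(1) unfolding bij_betw_def by auto
    then show "inj_on f (insert a A)" unfolding f_def inj_on_def using insert.hyps by auto
    show "f ` insert a A = B" unfolding f_def using \<open>f0 ` A = B - {b}\<close> b insert.hyps by auto
  qed
  moreover have "\<forall>x\<in>insert a A. h (f x) = g x" unfolding f_def using f0 b insert.hyps by auto
  ultimately show ?case by blast
qed


definition img :: "(nat \<Rightarrow> nat) \<Rightarrow> nat set set \<Rightarrow> nat set set" where
  "img f E = (\<lambda>e. f ` e) ` E"

lemma walk_map: "walk E W \<Longrightarrow> walk (img f E) (map f W)"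
proof (induction E W rule: walk.induct)
  case (3 E x y xs)
  then have "f ` {x, y} \<in> img f E" unfolding img_def by (intro imageI) simp
  then have "{f x, f y} \<in> img f E" by simp
  then show ?case using 3 by simp
qed auto


lemma cedges_map: "cedges (map f vs) = img f (cedges vs)"
  unfolding cedges_def img_def
proof (intro equalityI subsetI)
  fix e assume "e \<in> {{map f vs ! i, map f vs ! ((i + 1) mod length (map f vs))} |i. i < length (map f vs)}"
  then obtain i where i: "i < length vs" "e = {map f vs ! i, map f vs ! ((i + 1) mod length vs)}" by auto
  have "0 < length vs" using i(1) by linarith
  then have "(i + 1) mod length vs < length vs" by simp
  then have "e = f ` {vs ! i, vs ! ((i + 1) mod length vs)}" using i by simp
  then show "e \<in> (`) f ` {{vs ! i, vs ! ((i + 1) mod length vs)} |i. i < length vs}" using i by blast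
next
  fix e assume "e \<in> (`) f ` {{vs ! i, vs ! ((i + 1) mod length vs)} |i. i < length vs}"
  then obtain i where i: "i < length vs" "e = f ` {vs ! i, vs ! ((i + 1) mod length vs)}" by auto
  have "0 < length vs" using i(1) by linarith
  then have "(i + 1) mod length vs < length vs" by simp
  then have "e = {map f vs ! i, map f vs ! ((i + 1) mod length (map f vs))}" using i by simp
  then show "e \<in> {{map f vs ! i, map f vs ! ((i + 1) mod length (map f vs))} |i. i < length (map f vs)}"
    using i(1) by (intro CollectI exI[of _ i]) simp
qed


lemma cyc_map: "cyc E vs \<Longrightarrow> inj_on f (set vs) \<Longrightarrow> cyc (img f E) (map f vs)"
  unfolding cyc_def using cedges_map[of f vs] by (auto simp: distinct_map img_def)

lemma img_img:
  assumes "\<forall>e\<in>E. e \<subseteq> V" "\<forall>x\<in>V. g (f x) = x"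
  shows "img g (img f E) = E"
proof -
  have "\<And>e. e \<in> E \<Longrightarrow> g ` f ` e = e"
  proof -
    fix e assume "e \<in> E"
    then have "e \<subseteq> V" using assms by blast
    then show "g ` f ` e = e" using assms(2) by (force simp: image_image)
  qed
  then show ?thesis unfolding img_def by (simp add: image_image)
qed


lemma bc_img:
  assumes bc: "bc V E" and inj: "inj_on f V"
  shows "bc (f ` V) (img f E)" "\<forall>x\<in>V. gdeg (img f E) (f x) = gdeg E x"
proof -
  have fin: "finite V" and ne: "V \<noteq> {}" and sg: "sg V E" and cn: "conn V E" and ca: "cact E" and bi: "bip E"
    using bc unfolding bc_def by auto
  have EV: "\<forall>e\<in>E. e \<subseteq> V" using sg_sub[OF sg] by blast
  let ?E = "img f E"
  have sg': "sg (f ` V) ?E"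
    unfolding sg_def
  proof
    fix e' assume "e' \<in> ?E"
    then obtain e where e: "e \<in> E" "e' = f ` e" unfolding img_def by blast
    then obtain u v where uv: "e = {u, v}" "u \<noteq> v" "u \<in> V" "v \<in> V" using sg unfolding sg_def by meson
    then have "f u \<noteq> f v" using inj by (metis inj_on_contraD)
    then show "\<exists>u v. e' = {u, v} \<and> u \<noteq> v \<and> u \<in> f ` V \<and> v \<in> f ` V" using e uv by auto
  qed
  have cn': "conn (f ` V) ?E"
    unfolding conn_def
  proof (intro ballI)
    fix u' v' assume "u' \<in> f ` V" "v' \<in> f ` V"
    then obtain u v where uv: "u \<in> V" "v \<in> V" "u' = f u" "v' = f v" by blast
    then obtain W where W: "walk E W" "hd W = u" "last W = v" using cn unfolding conn_def by blast
    have "W \<noteq> []" using W walk_nonempty by auto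
    then show "\<exists>W. walk ?E W \<and> hd W = u' \<and> last W = v'"
      using walk_map[OF W(1)] W uv by (intro exI[of _ "map f W"]) (simp add: hd_map last_map)
  qed
  define g where "g = inv_into V f"
  have gf: "\<forall>x\<in>V. g (f x) = x" unfolding g_def using inj by simp
  have fg: "\<forall>y\<in>f ` V. f (g y) = y" unfolding g_def by (simp add: f_inv_into_f)
  have ginj: "inj_on g (f ` V)" unfolding g_def by (rule inj_on_inv_into) simp
  have gE: "img g ?E = E" using img_img[of E V g f] EV gf by blast
  have E'V: "\<forall>e\<in>?E. e \<subseteq> f ` V" using sg_sub[OF sg'] by blast
  have gV: "\<forall>y\<in>f ` V. g y \<in> V" unfolding g_def by (simp add: inv_into_into)
  have ca': "cact ?E"
    unfolding cact_def
  proof (intro ballI allI impI)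
    fix e' vs1 vs2 assume a: "e' \<in> ?E" "cyc ?E vs1 \<and> cyc ?E vs2 \<and> e' \<in> cedges vs1 \<and> e' \<in> cedges vs2"
    have s1: "set vs1 \<subseteq> f ` V" and s2: "set vs2 \<subseteq> f ` V" using cyc_set_sub[OF sg'] a by auto
    have c1: "cyc E (map g vs1)" using cyc_map[of ?E vs1 g] a ginj s1 gE by (metis inj_on_subset)
    have c2: "cyc E (map g vs2)" using cyc_map[of ?E vs2 g] a ginj s2 gE by (metis inj_on_subset)
    have "g ` e' \<in> E" using a gE unfolding img_def by blast
    moreover have "g ` e' \<in> cedges (map g vs1)" "g ` e' \<in> cedges (map g vs2)"
      using a cedges_map unfolding img_def by auto
    ultimately have "cedges (map g vs1) = cedges (map g vs2)" using ca c1 c2 unfolding cact_def by blast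
    then have eq: "img g (cedges vs1) = img g (cedges vs2)" using cedges_map by metis
    have C1: "\<forall>e\<in>cedges vs1. e \<subseteq> f ` V" and C2: "\<forall>e\<in>cedges vs2. e \<subseteq> f ` V"
      using cedges_sub s1 s2 by blast+
    have "img f (img g (cedges vs1)) = cedges vs1" using img_img[of "cedges vs1" "f ` V" f g] C1 fg by blast
    moreover have "img f (img g (cedges vs2)) = cedges vs2" using img_img[of "cedges vs2" "f ` V" f g] C2 fg by blast
    ultimately show "cedges vs1 = cedges vs2" using eq by metis
  qed
  obtain A where A: "\<forall>e\<in>E. card (e \<inter> A) = 1" using bi unfolding bip_def by blast
  have "\<forall>e'\<in>?E. card (e' \<inter> f ` (A \<inter> V)) = 1"
  proof
    fix e' assume "e' \<in> ?E"
    then obtain e where e: "e \<in> E" "e' = f ` e" unfolding img_def by blast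
    have eV: "e \<subseteq> V" using e EV by blast
    have "f ` (e \<inter> (A \<inter> V)) = f ` e \<inter> f ` (A \<inter> V)"
      by (rule inj_on_image_Int[OF inj eV]) simp
    moreover have "e \<inter> (A \<inter> V) = e \<inter> A" using eV by blast
    ultimately have "f ` e \<inter> f ` (A \<inter> V) = f ` (e \<inter> A)" by simp
    moreover have "card (f ` (e \<inter> A)) = card (e \<inter> A)"
      using inj eV by (meson card_image inf_le1 inj_on_subset subset_trans)
    ultimately show "card (e' \<inter> f ` (A \<inter> V)) = 1" using A e by simp
  qed
  then have bi': "bip ?E" unfolding bip_def by blast
  show "bc (f ` V) ?E" unfolding bc_def using fin ne sg' cn' ca' bi' by simp
  show "\<forall>x\<in>V. gdeg ?E (f x) = gdeg E x"
  proof
    fix x assume x: "x \<in> V"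
    have "{e'\<in>?E. f x \<in> e'} = (\<lambda>e. f ` e) ` {e\<in>E. x \<in> e}"
    proof (intro equalityI subsetI)
      fix e' assume "e' \<in> {e'\<in>?E. f x \<in> e'}"
      then obtain e where e: "e \<in> E" "e' = f ` e" "f x \<in> f ` e" unfolding img_def by blast
      have "e \<subseteq> V" using e EV by blast
      then have "x \<in> e" using inj_on_image_mem_iff[OF inj x] e by blast
      then show "e' \<in> (\<lambda>e. f ` e) ` {e\<in>E. x \<in> e}" using e by blast
    next
      fix e' assume "e' \<in> (\<lambda>e. f ` e) ` {e\<in>E. x \<in> e}"
      then show "e' \<in> {e'\<in>?E. f x \<in> e'}" unfolding img_def by blast
    qed
    moreover have "{e\<in>E. x \<in> e} \<subseteq> Pow V" using EV by blast
    then have "inj_on (\<lambda>e. f ` e) {e\<in>E. x \<in> e}"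
      using inj_on_image_Pow[OF inj] inj_on_subset by blast
    ultimately show "gdeg ?E (f x) = gdeg E x" unfolding gdeg_def by (simp add: card_image)
  qed
qed

lemma bicactus_bc:
  assumes "is_bicactus n E" "1 \<le> n"
  shows "bc {1..n} E"
proof -
  have sg: "sg {1..n} E" using assms unfolding is_bicactus_def is_cactus_def simple_graph_on_def sg_def by blast
  have cn: "conn {1..n} E" using assms unfolding is_bicactus_def is_cactus_def connected_graph_def conn_def
    by (simp add: is_path_walk)
  have ca: "cact E" using assms unfolding is_bicactus_def is_cactus_def cact_def
    by (metis is_cycle_edges_iff)
  have bi: "bip E" using assms unfolding is_bicactus_def is_bipartite_def bip_def by blast
  show ?thesis unfolding bc_def using sg cn ca bi assms(2) by auto
qed

lemma bc_bicactus:
  assumes "bc {1..n} E"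
  shows "is_bicactus n E" "simple_graph_on n E"
proof -
  have sg: "sg {1..n} E" and cn: "conn {1..n} E" and ca: "cact E" and bi: "bip E"
    using assms unfolding bc_def by auto
  show sg': "simple_graph_on n E" using sg unfolding simple_graph_on_def sg_def by blast
  have cn': "connected_graph n E" using cn unfolding connected_graph_def conn_def by (simp add: is_path_walk)
  have ca': "\<forall>e\<in>E. \<forall>C1 C2. is_cycle_edges E C1 \<and> is_cycle_edges E C2 \<and> e \<in> C1 \<and> e \<in> C2 \<longrightarrow> C1 = C2"
    using ca unfolding cact_def by (metis is_cycle_edges_iff)
  obtain A where A: "\<forall>e\<in>E. card (e \<inter> A) = 1" using bi unfolding bip_def by blast
  have "\<forall>e\<in>E. card (e \<inter> (A \<inter> {1..n})) = 1"
  proof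
    fix e assume e: "e \<in> E"
    then have "e \<subseteq> {1..n}" using sg_sub[OF sg] by blast
    then have "e \<inter> (A \<inter> {1..n}) = e \<inter> A" by blast
    then show "card (e \<inter> (A \<inter> {1..n})) = 1" using A e by simp
  qed
  then have "is_bipartite n E" unfolding is_bipartite_def by blast
  then show "is_bicactus n E" unfolding is_bicactus_def is_cactus_def using sg' cn' ca' by blast
qed

lemma handshake:
  assumes "finite V" "sg V E"
  shows "(\<Sum>v\<in>V. gdeg E v) = 2 * card E"
proof -
  have finE: "finite E" using sg_finite[OF assms] .
  have "(\<Sum>v\<in>V. gdeg E v) = (\<Sum>v\<in>V. \<Sum>e\<in>E. if v \<in> e then 1 else 0)"
    unfolding gdeg_def using finE by (simp add: sum.inter_filter[symmetric])
  also have "\<dots> = (\<Sum>e\<in>E. \<Sum>v\<in>V. if v \<in> e then 1 else 0)" by (rule sum.swap)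
  also have "\<dots> = (\<Sum>e\<in>E. 2)"
  proof (rule sum.cong[OF refl])
    fix e assume e: "e \<in> E"
    then obtain u w where uw: "e = {u, w}" "u \<noteq> w" "u \<in> V" "w \<in> V" using assms(2) unfolding sg_def by meson
    have "(\<Sum>v\<in>V. if v \<in> e then 1 else 0) = card {v\<in>V. v \<in> e}"
      using assms(1) by (simp add: sum.inter_filter[symmetric])
    also have "{v\<in>V. v \<in> e} = {u, w}" using uw by auto
    finally show "(\<Sum>v\<in>V. if v \<in> e then 1 else 0) = (2::nat)" using uw by simp
  qed
  finally show ?thesis by simp
qed

lemma mset_stats:
  fixes d :: "nat \<Rightarrow> nat" and A :: "nat set"
  assumes "finite A"
  shows "size (image_mset d (mset_set A)) = card A"
    "sum_mset (image_mset d (mset_set A)) = (\<Sum>i\<in>A. d i)"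
    "size (filter_mset P (image_mset d (mset_set A))) = card {i\<in>A. P (d i)}"
    "count (image_mset d (mset_set A)) x = card {i\<in>A. d i = x}"
proof -
  show "size (image_mset d (mset_set A)) = card A" by simp
  show "sum_mset (image_mset d (mset_set A)) = (\<Sum>i\<in>A. d i)" by (simp add: sum_unfold_sum_mset)
  have fs: "filter_mset P (image_mset d (mset_set A)) = image_mset d (mset_set {i\<in>A. P (d i)})"
    using image_mset_filter_mset_swap[of d P "mset_set A", symmetric] assms by simp
  then show sz: "size (filter_mset P (image_mset d (mset_set A))) = card {i\<in>A. P (d i)}" by simp
  have "count (image_mset d (mset_set A)) x = size (filter_mset (\<lambda>y. y = x) (image_mset d (mset_set A)))"
    by (simp add: filter_eq_replicate_mset)
  also have "\<dots> = card {i\<in>A. d i = x}"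
    using image_mset_filter_mset_swap[of d "\<lambda>y. y = x" "mset_set A", symmetric] assms by simp
  finally show "count (image_mset d (mset_set A)) x = card {i\<in>A. d i = x}" .
qed

lemma floor_equiv:
  fixes n S a b :: nat
  assumes "even S" "1 \<le> n"
  shows "(int (S div 2) \<le> floor ((4 * (real n - 1) - max (real a) ((real a + real b) / 2)) / 3))
     \<longleftrightarrow> (3 * S + 2 * a + 8 \<le> 8 * n \<and> 3 * S + a + b + 8 \<le> 8 * n)"
proof -
  obtain m where m: "S = 2 * m" using assms(1) by blast
  have "(int (S div 2) \<le> floor ((4 * (real n - 1) - max (real a) ((real a + real b) / 2)) / 3))
      \<longleftrightarrow> real m \<le> (4 * (real n - 1) - max (real a) ((real a + real b) / 2)) / 3"
    using m by (simp add: le_floor_iff)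
  also have "\<dots> \<longleftrightarrow> 3 * real m + max (real a) ((real a + real b) / 2) \<le> 4 * (real n - 1)"
  proof -
    have "(real m \<le> (X - B) / 3) \<longleftrightarrow> (3 * real m + B \<le> X)" for B X :: real by (simp add: field_simps)
    then show ?thesis by blast
  qed
  also have "\<dots> \<longleftrightarrow> 3 * real m + real a \<le> 4 * (real n - 1) \<and> 3 * real m + (real a + real b) / 2 \<le> 4 * (real n - 1)"
    by (smt (verit))
  also have "\<dots> \<longleftrightarrow> (3 * S + 2 * a + 8 \<le> 8 * n \<and> 3 * S + a + b + 8 \<le> 8 * n)"
  proof -
    have e1: "3 * real m + real a \<le> 4 * (real n - 1) \<longleftrightarrow> 3 * S + 2 * a + 8 \<le> 8 * n"
    proof -
      have "3 * S + 2 * a + 8 \<le> 8 * n \<longleftrightarrow> real (3 * S + 2 * a + 8) \<le> real (8 * n)" by (simp only: of_nat_le_iff)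
      also have "\<dots> \<longleftrightarrow> 6 * real m + 2 * real a + 8 \<le> 8 * real n" using m by simp
      finally show ?thesis by (smt (verit))
    qed
    have e2: "3 * real m + (real a + real b) / 2 \<le> 4 * (real n - 1) \<longleftrightarrow> 3 * S + a + b + 8 \<le> 8 * n"
    proof -
      have "3 * S + a + b + 8 \<le> 8 * n \<longleftrightarrow> real (3 * S + a + b + 8) \<le> real (8 * n)" by (simp only: of_nat_le_iff)
      also have "\<dots> \<longleftrightarrow> 6 * real m + real a + real b + 8 \<le> 8 * real n" using m by simp
      also have "\<dots> \<longleftrightarrow> 3 * real m + (real a + real b) / 2 \<le> 4 * (real n - 1)"
        by (simp add: field_simps)
      finally show ?thesis by simp
    qed
    show ?thesis using e1 e2 by simp
  qed
  finally show ?thesis .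
qed

theorem theorem7p3:
  fixes n :: nat and d :: "nat \<Rightarrow> nat"
  assumes "degree_sequence n d"
    and "n \<ge> 4" and "d 4 \<ge> 2"
    and "(\<Sum>i=1..n. d i) > 2 * n"
    and "mu_odd n d + mu1 n d \<ge> 2"
  shows "(\<exists>E. realizes n d E \<and> is_bicactus n E) \<longleftrightarrow>
    (let m = (\<Sum>i=1..n. d i) div 2;
         beta = max (real (mu1 n d)) ((real (mu1 n d) + real (mu_odd n d)) / 2)
     in int m \<le> floor ((4 * (real n - 1) - beta) / 3))"
proof -
  define S where "S = (\<Sum>i=1..n. d i)"
  define D where "D = image_mset d (mset_set {1..n})"
  have pos: "\<forall>i\<in>{1..n}. 1 \<le> d i" and evS: "even S"
    and mono: "\<forall>i j. 1 \<le> i \<and> i \<le> j \<and> j \<le> n \<longrightarrow> d j \<le> d i"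
    using assms(1) unfolding degree_sequence_def S_def by auto
  have n1: "1 \<le> n" using assms(2) by simp
  have oddc: "card {i\<in>{1..n}. odd (d i)} = mu1 n d + mu_odd n d"
  proof -
    have "{i\<in>{1..n}. odd (d i)} = {i\<in>{1..n}. d i = 1} \<union> {i\<in>{1..n}. odd (d i) \<and> d i > 1}"
      using pos by force
    moreover have "{i\<in>{1..n}. d i = 1} \<inter> {i\<in>{1..n}. odd (d i) \<and> d i > 1} = {}" by auto
    ultimately show ?thesis unfolding mu1_def mu_odd_def by (simp add: card_Un_disjoint)
  qed
  have RHS: "(let m = (\<Sum>i=1..n. d i) div 2;
         beta = max (real (mu1 n d)) ((real (mu1 n d) + real (mu_odd n d)) / 2)
     in int m \<le> floor ((4 * (real n - 1) - beta) / 3)) \<longleftrightarrow>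
     (3 * S + 2 * mu1 n d + 8 \<le> 8 * n \<and> 3 * S + mu1 n d + mu_odd n d + 8 \<le> 8 * n)"
    using floor_equiv[OF evS n1, of "mu1 n d" "mu_odd n d"] unfolding S_def Let_def by simp
  show ?thesis unfolding RHS
  proof
    assume "\<exists>E. realizes n d E \<and> is_bicactus n E"
    then obtain E where E: "realizes n d E" "is_bicactus n E" by blast
    have bcE: "bc {1..n} E" using bicactus_bc[OF E(2) n1] .
    have sg: "sg {1..n} E" using bcE unfolding bc_def by simp
    have deg: "\<forall>i\<in>{1..n}. gdeg E i = d i" using E(1) unfolding realizes_def by simp
    have MI: "(\<forall>z\<in>{1..n}. ineq1 {1..n} (card E) (gdeg E) z) \<and> ineq2 {1..n} (card E) (gdeg E)"
      using main_ineq[of "{1..n}" E] bcE unfolding bc_def by simp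
    have I1: "ineq1 {1..n} (card E) (gdeg E) 1" using MI n1 by simp
    have I2: "ineq2 {1..n} (card E) (gdeg E)" using MI by simp
    have d1: "d 1 \<ge> 2" using mono assms(2,3) by (metis le_trans one_le_numeral order_refl)
    have L: "{v\<in>{1..n}. v \<noteq> 1 \<and> gdeg E v = 1} = {i\<in>{1..n}. d i = 1}" using deg d1 by force
    have O: "{v\<in>{1..n}. odd (gdeg E v)} = {i\<in>{1..n}. odd (d i)}" using deg by force
    have hs: "(\<Sum>v\<in>{1..n}. gdeg E v) = 2 * card E" using handshake[OF _ sg] by simp
    have "(\<Sum>v\<in>{1..n}. gdeg E v) = S" unfolding S_def using deg by simp
    then have SE: "S = 2 * card E" using hs by simp
    show "3 * S + 2 * mu1 n d + 8 \<le> 8 * n \<and> 3 * S + mu1 n d + mu_odd n d + 8 \<le> 8 * n"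
      using I1 I2 unfolding ineq1_def ineq2_def L O oddc mu1_def[symmetric] SE by simp
  next
    assume ineq: "3 * S + 2 * mu1 n d + 8 \<le> 8 * n \<and> 3 * S + mu1 n d + mu_odd n d + 8 \<le> 8 * n"
    have fin: "finite {1..n}" by simp
    note st = mset_stats[OF fin, where d = d, folded D_def]
    have sD: "size D = n" "sum_mset D = S" "count D 1 = mu1 n d" "size (filter_mset odd D) = mu1 n d + mu_odd n d"
      using st(1,2) st(3)[where P = odd] st(4)[where x = 1] oddc unfolding S_def mu1_def by auto
    have posD: "\<forall>x\<in>#D. 1 \<le> x" unfolding D_def using pos by auto
    have "good D" unfolding good_def using posD sD evS ineq assms(4,5) S_def by auto
    then have "realizable D" using good_real by blast
    then obtain V E where VE: "bc V E" "image_mset (gdeg E) (mset_set V) = D" unfolding realizable_def by blast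
    have finV: "finite V" using VE unfolding bc_def by simp
    obtain f where f: "bij_betw f V {1..n}" "\<forall>x\<in>V. d (f x) = gdeg E x"
      using mset_bij[OF finV fin, of "gdeg E" d] VE(2) unfolding D_def by blast
    have inj: "inj_on f V" and fV: "f ` V = {1..n}" using f(1) unfolding bij_betw_def by auto
    note BI = bc_img[OF VE(1) inj]
    have bc': "bc {1..n} (img f E)" using BI(1) fV by simp
    have "\<forall>i\<in>{1..n}. gdeg (img f E) i = d i"
    proof
      fix i assume "i \<in> {1..n}"
      then obtain x where x: "x \<in> V" "i = f x" using fV by blast
      then show "gdeg (img f E) i = d i" using BI(2) f(2) by simp
    qed
    then have "realizes n d (img f E)" unfolding realizes_def using bc_bicactus(2)[OF bc'] by simp
    then show "\<exists>E. realizes n d E \<and> is_bicactus n E" using bc_bicactus(1)[OF bc'] by blast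
  qed
qed

end
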